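(* Let $f\colon E\to\mathbb{R}$ be smooth and let $Z$ be the vector field along $E$ with components $Z^\mu=g^{\mu\nu}\partial f/\partial y^\nu$. Then \[ \nabla^{HC}\cdot Z=g^{\mu\nu}\Big(\frac{\delta}{\delta x^\mu}\frac{\partial f}{\partial y^\nu}-\Gamma^\alpha_{\nu\mu}\frac{\partial f}{\partial y^\alpha}\Big)=\frac{\partial}{\partial y^\nu}\Big(g^{\nu\mu}\frac{\delta f}{\delta x^\mu}\Big)+2I^\mu\frac{\delta f}{\delta x^\mu}+J^\alpha\frac{\partial f}{\partial y^\alpha}, \] where $I^\mu=g^{\mu\nu}I_\nu$ and $J^\alpha=g^{\alpha\beta}J_\beta$.
   Context: $M$ smooth $n$-manifold, $E=TM\setminus0$, induced coordinates $\{x^\mu,y^\mu\}$. $\mathscr{L}\colon E\to\mathbb{R}$ smooth, positively homogeneous of degree two in $y$, with non-degenerate $g_{\mu\nu}=\partial^2\mathscr{L}/\partial y^\mu\partial y^\nu$, inverse $g^{\mu\nu}$. $C_{\alpha\beta\gamma}=\tfrac12\partial g_{\beta\gamma}/\partial y^\alpha$, $I_\gamma=g^{\alpha\beta}C_{\alpha\beta\gamma}$. Spray $2G^\alpha=g^{\alpha\delta}\big(\frac{\partial^2\mathscr{L}}{\partial x^\gamma\partial y^\delta}y^\gamma-\frac{\partial\mathscr{L}}{\partial x^\delta}\big)$, $N^\alpha_\mu=G^\alpha_\mu=\partial G^\alpha/\partial y^\mu$, Berwald coefficients $G^\alpha_{\mu\nu}=\partial G^\alpha_\mu/\partial y^\nu$,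 $\frac{\delta}{\delta x^\mu}=\frac{\partial}{\partial x^\mu}-N^\nu_\mu\frac{\partial}{\partial y^\nu}$, $\Gamma^\alpha_{\beta\gamma}=\tfrac12 g^{\alpha\sigma}\big(\frac{\delta g_{\sigma\gamma}}{\delta x^\beta}+\frac{\delta g_{\sigma\beta}}{\delta x^\gamma}-\frac{\delta g_{\beta\gamma}}{\delta x^\sigma}\big)$. Landsberg tensor $L^\alpha_{\beta\gamma}=G^\alpha_{\beta\gamma}-\Gamma^\alpha_{\beta\gamma}$, and $J_\alpha=L^\mu_{\alpha\mu}$. $(\nabla^{HC}_\alpha Z)^\beta=\frac{\delta Z^\beta}{\delta x^\alpha}+\Gamma^\beta_{\mu\alpha}Z^\mu$, $\nabla^{HC}\cdot Z=(\nabla^{HC}_\alpha Z)^\alpha$. *)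

theory Defs
  imports "HOL-Analysis.Analysis"
begin

text \<open>A point of E = TM minus the zero section, in induced
coordinates, is a pair z = (x, y) of vectors in R^n; over a chart domain U of M,
E is U x (R^n - {0}).\<close>

type_synonym 'n pt = "(real^'n) \<times> (real^'n)"

fun Ck :: "nat \<Rightarrow> ('n::finite) pt set \<Rightarrow> ('n pt \<Rightarrow> real) \<Rightarrow> bool" where
  "Ck 0 S F = continuous_on S F"
| "Ck (Suc k) S F = (F differentiable_on S \<and>
      (\<forall>v. Ck k S (\<lambda>z. frechet_derivative F (at z) v)))"

definition smooth_on :: "('n::finite) pt set \<Rightarrow> ('n pt \<Rightarrow> real) \<Rightarrow> bool" where
  "smooth_on S F = (\<forall>k. Ck k S F)"

definition px :: "'n::finite \<Rightarrow> ('n pt \<Rightarrow> real) \<Rightarrow> 'n pt \<Rightarrow> real" where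
  "px \<mu> F z = frechet_derivative F (at z) (axis \<mu> 1, 0)"

definition py :: "'n::finite \<Rightarrow> ('n pt \<Rightarrow> real) \<Rightarrow> 'n pt \<Rightarrow> real" where
  "py \<mu> F z = frechet_derivative F (at z) (0, axis \<mu> 1)"

definition gmat :: "('n::finite pt \<Rightarrow> real) \<Rightarrow> 'n pt \<Rightarrow> real^'n^'n" where
  "gmat L z = (\<chi> \<mu> \<nu>. py \<mu> (py \<nu> L) z)"

definition glow :: "('n::finite pt \<Rightarrow> real) \<Rightarrow> 'n pt \<Rightarrow> 'n \<Rightarrow> 'n \<Rightarrow> real" where
  "glow L z \<mu> \<nu> = gmat L z $ \<mu> $ \<nu>"

definition gup :: "('n::finite pt \<Rightarrow> real) \<Rightarrow> 'n pt \<Rightarrow> 'n \<Rightarrow> 'n \<Rightarrow> real" where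
  "gup L z \<mu> \<nu> = matrix_inv (gmat L z) $ \<mu> $ \<nu>"

definition Cartan :: "('n::finite pt \<Rightarrow> real) \<Rightarrow> 'n pt \<Rightarrow> 'n \<Rightarrow> 'n \<Rightarrow> 'n \<Rightarrow> real" where
  "Cartan L z a b c = (1/2) * py a (\<lambda>w. glow L w b c) z"

definition Ilow :: "('n::finite pt \<Rightarrow> real) \<Rightarrow> 'n pt \<Rightarrow> 'n \<Rightarrow> real" where
  "Ilow L z c = (\<Sum>a\<in>UNIV. \<Sum>b\<in>UNIV. gup L z a b * Cartan L z a b c)"

text \<open>Spray coefficients G^alpha (so that 2 G^alpha is the given expression).\<close>
definition Gspray :: "('n::finite pt \<Rightarrow> real) \<Rightarrow> 'n pt \<Rightarrow> 'n \<Rightarrow> real" where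
  "Gspray L z \<alpha> = (1/2) * (\<Sum>\<delta>\<in>UNIV. gup L z \<alpha> \<delta> *
      ((\<Sum>\<gamma>\<in>UNIV. px \<gamma> (py \<delta> L) z * (snd z $ \<gamma>)) - px \<delta> L z))"

definition Nconn :: "('n::finite pt \<Rightarrow> real) \<Rightarrow> 'n pt \<Rightarrow> 'n \<Rightarrow> 'n \<Rightarrow> real" where
  "Nconn L z \<alpha> \<mu> = py \<mu> (\<lambda>w. Gspray L w \<alpha>) z"

definition Berwald :: "('n::finite pt \<Rightarrow> real) \<Rightarrow> 'n pt \<Rightarrow> 'n \<Rightarrow> 'n \<Rightarrow> 'n \<Rightarrow> real" where
  "Berwald L z \<alpha> \<mu> \<nu> = py \<nu> (\<lambda>w. Nconn L w \<alpha> \<mu>) z"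

definition dlt :: "('n::finite pt \<Rightarrow> real) \<Rightarrow> 'n \<Rightarrow> ('n pt \<Rightarrow> real) \<Rightarrow> 'n pt \<Rightarrow> real" where
  "dlt L \<mu> F z = px \<mu> F z - (\<Sum>\<nu>\<in>UNIV. Nconn L z \<nu> \<mu> * py \<nu> F z)"

definition Gam :: "('n::finite pt \<Rightarrow> real) \<Rightarrow> 'n pt \<Rightarrow> 'n \<Rightarrow> 'n \<Rightarrow> 'n \<Rightarrow> real" where
  "Gam L z \<alpha> \<beta> \<gamma> = (1/2) * (\<Sum>\<sigma>\<in>UNIV. gup L z \<alpha> \<sigma> *
      (dlt L \<beta> (\<lambda>w. glow L w \<sigma> \<gamma>) z + dlt L \<gamma> (\<lambda>w. glow L w \<sigma> \<beta>) z
       - dlt L \<sigma> (\<lambda>w. glow L w \<beta> \<gamma>) z))"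

definition Lands :: "('n::finite pt \<Rightarrow> real) \<Rightarrow> 'n pt \<Rightarrow> 'n \<Rightarrow> 'n \<Rightarrow> 'n \<Rightarrow> real" where
  "Lands L z \<alpha> \<beta> \<gamma> = Berwald L z \<alpha> \<beta> \<gamma> - Gam L z \<alpha> \<beta> \<gamma>"

definition Jlow :: "('n::finite pt \<Rightarrow> real) \<Rightarrow> 'n pt \<Rightarrow> 'n \<Rightarrow> real" where
  "Jlow L z \<alpha> = (\<Sum>\<mu>\<in>UNIV. Lands L z \<mu> \<alpha> \<mu>)"

definition Iup :: "('n::finite pt \<Rightarrow> real) \<Rightarrow> 'n pt \<Rightarrow> 'n \<Rightarrow> real" where
  "Iup L z \<mu> = (\<Sum>\<nu>\<in>UNIV. gup L z \<mu> \<nu> * Ilow L z \<nu>)"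

definition Jup :: "('n::finite pt \<Rightarrow> real) \<Rightarrow> 'n pt \<Rightarrow> 'n \<Rightarrow> real" where
  "Jup L z \<alpha> = (\<Sum>\<beta>\<in>UNIV. gup L z \<alpha> \<beta> * Jlow L z \<beta>)"

text \<open>HC divergence of a vector field Z along E (Z w \<beta> = Z^\<beta> at w):
  sum over alpha of (nabla^HC_alpha Z)^alpha.\<close>
definition divHC :: "('n::finite pt \<Rightarrow> real) \<Rightarrow> ('n pt \<Rightarrow> 'n \<Rightarrow> real) \<Rightarrow> 'n pt \<Rightarrow> real" where
  "divHC L Z z = (\<Sum>\<alpha>\<in>UNIV. dlt L \<alpha> (\<lambda>w. Z w \<alpha>) z
                      + (\<Sum>\<mu>\<in>UNIV. Gam L z \<alpha> \<mu> \<alpha> * Z z \<mu>))"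

end

theory Submission
  imports Defs
begin



lemma Ck_SucD: "Ck (Suc k) S F \<Longrightarrow> Ck k S (\<lambda>z. frechet_derivative F (at z) v)"
  by (cases v) simp

lemma Ck_SucI: "F differentiable_on S \<Longrightarrow> (\<And>v. Ck k S (\<lambda>z. frechet_derivative F (at z) v)) \<Longrightarrow> Ck (Suc k) S F"
  by simp

lemma Ck_SucD': "Ck (Suc k) S F \<Longrightarrow> F differentiable_on S"
  by simp

lemma fd_cong:
  assumes "open S" "z \<in> S" "\<And>w. w \<in> S \<Longrightarrow> F w = G w"
  shows "frechet_derivative F (at z) = frechet_derivative G (at z)"
proof -
  have "\<And>f'. (F has_derivative f') (at z) \<longleftrightarrow> (G has_derivative f') (at z)"
  proof
    fix f' assume "(F has_derivative f') (at z)"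
    then show "(G has_derivative f') (at z)" using has_derivative_transform_within_open[OF _ assms(1,2)] assms(3) by blast
  next
    fix f' assume "(G has_derivative f') (at z)"
    then show "(F has_derivative f') (at z)" using has_derivative_transform_within_open[OF _ assms(1,2), of G f' UNIV F] assms(3) by metis
  qed
  then show ?thesis unfolding frechet_derivative_def by simp
qed

lemma fd_eq: "(F has_derivative F') (at z) \<Longrightarrow> frechet_derivative F (at z) v = F' v"
  by (drule frechet_derivative_at) simp

lemma Ck_cong:
  assumes "open S" "\<And>w. w \<in> S \<Longrightarrow> F w = G w" "Ck k S F"
  shows "Ck k S G"
  using assms(2,3)
proof (induction k arbitrary: F G)
  case 0
  have "continuous_on S F = continuous_on S G"
    by (rule continuous_on_cong[OF refl]) (rule 0(1))
  then show ?case using 0 by simp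
next
  case (Suc k)
  have dF: "F differentiable_on S" using Ck_SucD'[OF Suc.prems(2)] .
  have "G differentiable_on S"
    unfolding differentiable_on_eq_differentiable_at[OF assms(1)]
  proof
    fix x assume x: "x \<in> S"
    then have "F differentiable at x" using dF differentiable_on_eq_differentiable_at[OF assms(1)] by blast
    then obtain f' where "(F has_derivative f') (at x)" unfolding differentiable_def by blast
    then have "(G has_derivative f') (at x)"
      by (rule has_derivative_transform_within_open[OF _ assms(1) x Suc.prems(1)])
    then show "G differentiable at x" unfolding differentiable_def by blast
  qed
  moreover have "Ck k S (\<lambda>z. frechet_derivative G (at z) v)" for v
  proof -
    have c: "Ck k S (\<lambda>z. frechet_derivative F (at z) v)" using Ck_SucD[OF Suc.prems(2)] .
    have eq: "frechet_derivative F (at w) v = frechet_derivative G (at w) v" if w: "w \<in> S" for w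
      by (rule fun_cong[OF fd_cong[OF assms(1) w Suc.prems(1)]])
    show ?thesis by (rule Suc.IH[OF eq c])
  qed
  ultimately show ?case by (intro Ck_SucI)
qed

lemma Ck_mono: "Ck (Suc k) S F \<Longrightarrow> Ck k S F"
proof (induction k arbitrary: F)
  case 0
  then show ?case by (simp add: differentiable_imp_continuous_on)
next
  case (Suc k)
  show ?case
    by (rule Ck_SucI[OF Ck_SucD'[OF Suc.prems] Suc.IH[OF Ck_SucD[OF Suc.prems]]])
qed


lemma Ck_const: "Ck k S (\<lambda>z. c)"
proof (induction k arbitrary: c)
  case 0
  then show ?case by simp
next
  case (Suc k)
  then show ?case by simp
qed

lemma Ck_linear: "bounded_linear l \<Longrightarrow> Ck k S l"
proof (cases k)
  case 0
  assume "bounded_linear l" then show ?thesis using 0 by (simp add: linear_continuous_on)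
next
  case (Suc m)
  assume l: "bounded_linear l"
  have d: "frechet_derivative l (at z) = l" for z
    using frechet_derivative_at[OF bounded_linear_imp_has_derivative[OF l]] by simp
  have "l differentiable_on S"
    using bounded_linear_imp_differentiable_on[OF l] .
  then show ?thesis using Suc by (simp add: d Ck_const)
qed

lemma Ck_add:
  assumes "open S" shows "Ck k S F \<Longrightarrow> Ck k S G \<Longrightarrow> Ck k S (\<lambda>z. F z + G z)"
proof (induction k arbitrary: F G)
  case 0
  then show ?case by (simp add: continuous_on_add)
next
  case (Suc k)
  have dF: "F differentiable_on S" and dG: "G differentiable_on S" using Ck_SucD' Suc.prems by auto
  have d: "F differentiable at w" "G differentiable at w" if "w \<in> S" for w
    using dF dG that differentiable_on_eq_differentiable_at[OF assms] by auto
  have "(\<lambda>z. F z + G z) differentiable_on S" using dF dG by (rule differentiable_on_add)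
  moreover have "Ck k S (\<lambda>z. frechet_derivative (\<lambda>z. F z + G z) (at z) v)" for v
  proof (rule Ck_cong[OF assms])
    show "Ck k S (\<lambda>z. frechet_derivative F (at z) v + frechet_derivative G (at z) v)"
      by (intro Suc.IH Ck_SucD[OF Suc.prems(1)] Ck_SucD[OF Suc.prems(2)])
    fix w assume w: "w \<in> S"
    show "frechet_derivative F (at w) v + frechet_derivative G (at w) v = frechet_derivative (\<lambda>z. F z + G z) (at w) v"
      using fd_eq[OF has_derivative_add[OF d(1)[OF w, unfolded frechet_derivative_works] d(2)[OF w, unfolded frechet_derivative_works]]]
      by simp
  qed
  ultimately show ?case by (intro Ck_SucI)
qed

lemma Ck_mult:
  assumes "open S" shows "Ck k S F \<Longrightarrow> Ck k S G \<Longrightarrow> Ck k S (\<lambda>z. F z * G z :: real)"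
proof (induction k arbitrary: F G)
  case 0
  then show ?case by (simp add: continuous_on_mult)
next
  case (Suc k)
  have dF: "F differentiable_on S" and dG: "G differentiable_on S" using Ck_SucD' Suc.prems by auto
  have d: "F differentiable at w" "G differentiable at w" if "w \<in> S" for w
    using dF dG that differentiable_on_eq_differentiable_at[OF assms] by auto
  have "(\<lambda>z. F z * G z) differentiable_on S" using dF dG by (rule differentiable_on_mult)
  moreover have "Ck k S (\<lambda>z. frechet_derivative (\<lambda>z. F z * G z) (at z) v)" for v
  proof (rule Ck_cong[OF assms])
    show "Ck k S (\<lambda>z. F z * frechet_derivative G (at z) v + frechet_derivative F (at z) v * G z)"
      by (intro Ck_add[OF assms] Suc.IH Ck_SucD[OF Suc.prems(1)] Ck_SucD[OF Suc.prems(2)] Ck_mono[OF Suc.prems(1)] Ck_mono[OF Suc.prems(2)])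
    fix w assume w: "w \<in> S"
    show "F w * frechet_derivative G (at w) v + frechet_derivative F (at w) v * G w = frechet_derivative (\<lambda>z. F z * G z) (at w) v"
      using fd_eq[OF has_derivative_mult[OF d(1)[OF w, unfolded frechet_derivative_works] d(2)[OF w, unfolded frechet_derivative_works]]]
      by simp
  qed
  ultimately show ?case by (intro Ck_SucI)
qed

lemma Ck_inverse:
  assumes "open S" shows "Ck k S F \<Longrightarrow> (\<And>w. w \<in> S \<Longrightarrow> F w \<noteq> 0) \<Longrightarrow> Ck k S (\<lambda>z. inverse (F z) :: real)"
proof (induction k arbitrary: F)
  case 0
  then show ?case by (simp add: continuous_on_inverse)
next
  case (Suc k)
  have dF: "F differentiable_on S" using Ck_SucD' Suc.prems by auto
  have d: "F differentiable at w" if "w \<in> S" for w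
    using dF that differentiable_on_eq_differentiable_at[OF assms] by auto
  have "(\<lambda>z. inverse (F z)) differentiable_on S"
    unfolding differentiable_on_eq_differentiable_at[OF assms]
    using d Suc.prems(2) differentiable_inverse by blast
  moreover have "Ck k S (\<lambda>z. frechet_derivative (\<lambda>z. inverse (F z)) (at z) v)" for v
  proof (rule Ck_cong[OF assms])
    have i: "Ck k S (\<lambda>z. inverse (F z))" by (rule Suc.IH[OF Ck_mono[OF Suc.prems(1)] Suc.prems(2)])
    show "Ck k S (\<lambda>z. (- 1) * (inverse (F z) * (frechet_derivative F (at z) v * inverse (F z))))"
      by (intro Ck_mult[OF assms] Ck_const i Ck_SucD[OF Suc.prems(1)])
    fix w assume w: "w \<in> S"
    show "(- 1) * (inverse (F w) * (frechet_derivative F (at w) v * inverse (F w))) = frechet_derivative (\<lambda>z. inverse (F z)) (at w) v"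
      using fd_eq[OF Deriv.has_derivative_inverse[OF Suc.prems(2)[OF w] d[OF w, unfolded frechet_derivative_works]]]
      by simp
  qed
  ultimately show ?case by (intro Ck_SucI)
qed




lemma sm_Ck: "smooth_on S F \<Longrightarrow> Ck k S F" by (simp add: smooth_on_def)
lemma sm_I: "(\<And>k. Ck k S F) \<Longrightarrow> smooth_on S F" by (simp add: smooth_on_def)

lemma sm_const: "smooth_on S (\<lambda>z. c)" by (intro sm_I Ck_const)
lemma sm_linear: "bounded_linear l \<Longrightarrow> smooth_on S l" by (intro sm_I Ck_linear)
lemma sm_cong: assumes "open S" "\<And>w. w \<in> S \<Longrightarrow> F w = G w" "smooth_on S F" shows "smooth_on S G"
proof (rule sm_I)
  fix k show "Ck k S G" by (rule Ck_cong[OF assms(1) assms(2) sm_Ck[OF assms(3)]])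
qed
lemma sm_add: "open S \<Longrightarrow> smooth_on S F \<Longrightarrow> smooth_on S G \<Longrightarrow> smooth_on S (\<lambda>z. F z + G z)"
  by (intro sm_I Ck_add) (auto dest: sm_Ck)
lemma sm_mult: "open S \<Longrightarrow> smooth_on S F \<Longrightarrow> smooth_on S G \<Longrightarrow> smooth_on S (\<lambda>z. F z * G z)"
  by (intro sm_I Ck_mult) (auto dest: sm_Ck)
lemma sm_inverse: "open S \<Longrightarrow> smooth_on S F \<Longrightarrow> (\<And>w. w \<in> S \<Longrightarrow> F w \<noteq> 0) \<Longrightarrow> smooth_on S (\<lambda>z. inverse (F z))"
  by (intro sm_I Ck_inverse) (auto dest: sm_Ck)
lemma sm_scale: "open S \<Longrightarrow> smooth_on S F \<Longrightarrow> smooth_on S (\<lambda>z. c * F z)"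
  using sm_mult[OF _ sm_const] by blast
lemma sm_diff: "open S \<Longrightarrow> smooth_on S F \<Longrightarrow> smooth_on S G \<Longrightarrow> smooth_on S (\<lambda>z. F z - G z)"
proof -
  assume a: "open S" "smooth_on S F" "smooth_on S G"
  have "smooth_on S (\<lambda>z. F z + (-1) * G z)" using a sm_add sm_scale by blast
  then show ?thesis by simp
qed
lemma sm_divide: "open S \<Longrightarrow> smooth_on S F \<Longrightarrow> smooth_on S G \<Longrightarrow> (\<And>w. w \<in> S \<Longrightarrow> G w \<noteq> 0) \<Longrightarrow> smooth_on S (\<lambda>z. F z / G z)"
proof -
  assume a: "open S" "smooth_on S F" "smooth_on S G" "(\<And>w. w \<in> S \<Longrightarrow> G w \<noteq> 0)"
  have "smooth_on S (\<lambda>z. F z * inverse (G z))" using a sm_mult sm_inverse by blast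
  then show ?thesis by (simp add: divide_inverse)
qed
lemma sm_sum: assumes "open S" "finite I" "\<And>i. i \<in> I \<Longrightarrow> smooth_on S (F i)" shows "smooth_on S (\<lambda>z. \<Sum>i\<in>I. F i z)"
  using assms(2,3)
proof (induction I rule: finite_induct)
  case empty
  then show ?case by (simp add: sm_const)
next
  case (insert x F)
  then show ?case by (simp add: sm_add[OF assms(1)])
qed
lemma sm_prod: assumes "open S" "finite I" "\<And>i. i \<in> I \<Longrightarrow> smooth_on S (F i)" shows "smooth_on S (\<lambda>z. \<Prod>i\<in>I. F i z)"
  using assms(2,3)
proof (induction I rule: finite_induct)
  case empty
  then show ?case by (simp add: sm_const)
next
  case (insert x F)
  then show ?case by (simp add: sm_mult[OF assms(1)])
qed
lemma sm_deriv: "smooth_on S F \<Longrightarrow> smooth_on S (\<lambda>z. frechet_derivative F (at z) v)"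
  by (intro sm_I) (rule Ck_SucD, rule sm_Ck)
lemma sm_diffble: "open S \<Longrightarrow> smooth_on S F \<Longrightarrow> z \<in> S \<Longrightarrow> F differentiable (at z)"
  using Ck_SucD'[OF sm_Ck[of S F "Suc 0"]] differentiable_on_eq_differentiable_at by blast
lemma sm_isCont: "open S \<Longrightarrow> smooth_on S F \<Longrightarrow> z \<in> S \<Longrightarrow> isCont F z"
  using sm_Ck[of S F 0] continuous_on_eq_continuous_at by fastforce

lemma fd_works: "F differentiable (at z) \<Longrightarrow> (F has_derivative frechet_derivative F (at z)) (at z)"
  using frechet_derivative_works by blast

lemma fd_add: "F differentiable (at z) \<Longrightarrow> G differentiable (at z) \<Longrightarrow>
  frechet_derivative (\<lambda>w. F w + G w) (at z) v = frechet_derivative F (at z) v + frechet_derivative G (at z) v"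
  by (rule fd_eq[OF has_derivative_add[OF fd_works fd_works]])
lemma fd_diff: "F differentiable (at z) \<Longrightarrow> G differentiable (at z) \<Longrightarrow>
  frechet_derivative (\<lambda>w. F w - G w) (at z) v = frechet_derivative F (at z) v - frechet_derivative G (at z) v"
  by (rule fd_eq[OF has_derivative_diff[OF fd_works fd_works]])
lemma fd_mult: assumes a: "F differentiable (at z)" and b: "G differentiable (at z)" shows
  "frechet_derivative (\<lambda>w. F w * G w :: real) (at z) v = frechet_derivative F (at z) v * G z + F z * frechet_derivative G (at z) v"
  using fd_eq[OF has_derivative_mult[OF fd_works[OF a] fd_works[OF b]]] by (simp add: algebra_simps)
lemma fd_sum: "finite I \<Longrightarrow> (\<And>i. i \<in> I \<Longrightarrow> F i differentiable (at z)) \<Longrightarrow>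
  frechet_derivative (\<lambda>w. \<Sum>i\<in>I. F i w) (at z) v = (\<Sum>i\<in>I. frechet_derivative (F i) (at z) v)"
  by (rule fd_eq[OF has_derivative_sum[OF fd_works]])
lemma fd_scale: "F differentiable (at z) \<Longrightarrow>
  frechet_derivative (\<lambda>w. c * F w :: real) (at z) v = c * frechet_derivative F (at z) v"
  using fd_mult[of "\<lambda>w. c" z F v] by simp
lemma fd_lin_add: "F differentiable (at z) \<Longrightarrow> frechet_derivative F (at z) (a + b) = frechet_derivative F (at z) a + frechet_derivative F (at z) b"
  using linear_frechet_derivative linear_add by blast
lemma fd_lin_scale: "F differentiable (at z) \<Longrightarrow> frechet_derivative F (at z) (c *\<^sub>R a) = c * frechet_derivative F (at z) a"
  using linear_frechet_derivative[THEN linear_scale] by fastforce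
lemma fd_lin_diff: "F differentiable (at z) \<Longrightarrow> frechet_derivative F (at z) (a - b) = frechet_derivative F (at z) a - frechet_derivative F (at z) b"
  using linear_frechet_derivative linear_diff by blast
lemma fd_lin_sum: "F differentiable (at z) \<Longrightarrow> frechet_derivative F (at z) (\<Sum>i\<in>I. a i) = (\<Sum>i\<in>I. frechet_derivative F (at z) (a i))"
  using linear_frechet_derivative linear_sum by blast

lemma line_D:
  fixes G :: "'a::real_normed_vector \<Rightarrow> real"
  assumes "G differentiable (at (c + t *\<^sub>R d))"
  shows "((\<lambda>s. G (c + s *\<^sub>R d)) has_real_derivative frechet_derivative G (at (c + t *\<^sub>R d)) d) (at t)"
proof -
  have g: "(G has_derivative frechet_derivative G (at (c + t *\<^sub>R d))) (at (c + t *\<^sub>R d))"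
    using assms frechet_derivative_works by blast
  have l: "((\<lambda>s. c + s *\<^sub>R d) has_derivative (\<lambda>h. h *\<^sub>R d)) (at t)"
    by (auto intro!: derivative_eq_intros)
  have "((\<lambda>s. G (c + s *\<^sub>R d)) has_derivative (\<lambda>h. frechet_derivative G (at (c + t *\<^sub>R d)) (h *\<^sub>R d))) (at t)"
    using has_derivative_compose[OF l g] by simp
  moreover have "(\<lambda>h. frechet_derivative G (at (c + t *\<^sub>R d)) (h *\<^sub>R d)) = (*) (frechet_derivative G (at (c + t *\<^sub>R d)) d)"
    using fd_lin_scale[OF assms] by (auto simp: mult.commute)
  ultimately show ?thesis unfolding has_field_derivative_def by simp
qed




lemma schwarz:
  fixes F :: "'a::real_normed_vector \<Rightarrow> real"
  assumes S: "open S" "z \<in> S"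
    and dF: "\<And>w. w \<in> S \<Longrightarrow> F differentiable (at w)"
    and dFu: "\<And>w. w \<in> S \<Longrightarrow> (\<lambda>w. frechet_derivative F (at w) u) differentiable (at w)"
    and dFv: "\<And>w. w \<in> S \<Longrightarrow> (\<lambda>w. frechet_derivative F (at w) v) differentiable (at w)"
    and cA: "isCont (\<lambda>w. frechet_derivative (\<lambda>w. frechet_derivative F (at w) u) (at w) v) z"
    and cB: "isCont (\<lambda>w. frechet_derivative (\<lambda>w. frechet_derivative F (at w) v) (at w) u) z"
  shows "frechet_derivative (\<lambda>w. frechet_derivative F (at w) u) (at z) v
       = frechet_derivative (\<lambda>w. frechet_derivative F (at w) v) (at z) u"
proof (rule ccontr)
  define Fu where "Fu = (\<lambda>w. frechet_derivative F (at w) u)"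
  define Fv where "Fv = (\<lambda>w. frechet_derivative F (at w) v)"
  define A where "A = (\<lambda>w. frechet_derivative Fu (at w) v)"
  define B where "B = (\<lambda>w. frechet_derivative Fv (at w) u)"
  assume "\<not> ?thesis"
  then have ne: "A z \<noteq> B z" unfolding A_def B_def Fu_def Fv_def .
  define e where "e = \<bar>A z - B z\<bar> / 2"
  have e: "e > 0" using ne unfolding e_def by simp
  obtain d1 where d1: "d1 > 0" "\<And>w. dist w z < d1 \<Longrightarrow> dist (A w) (A z) < e"
    using cA e unfolding continuous_at_eps_delta A_def Fu_def by blast
  obtain d2 where d2: "d2 > 0" "\<And>w. dist w z < d2 \<Longrightarrow> dist (B w) (B z) < e"
    using cB e unfolding continuous_at_eps_delta B_def Fv_def by blast
  obtain d0 where d0: "d0 > 0" "ball z d0 \<subseteq> S"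
    using S open_contains_ball by blast
  define d where "d = min d0 (min d1 d2)"
  have d: "d > 0" "d \<le> d0" "d \<le> d1" "d \<le> d2" using d0 d1 d2 unfolding d_def by auto
  define M where "M = norm u + norm v + 1"
  have M: "M > 0" "norm u + norm v < M" unfolding M_def by (auto intro: add_nonneg_pos)
  define r where "r = d / (2 * M)"
  have r: "r > 0" unfolding r_def using d M by simp
  have rM: "r * M < d" unfolding r_def using d M by (simp add: field_simps)
  have pts: "dist (z + s *\<^sub>R u + t *\<^sub>R v) z < d" if "0 \<le> s" "s \<le> r" "0 \<le> t" "t \<le> r" for s t
  proof -
    have "dist (z + s *\<^sub>R u + t *\<^sub>R v) z = norm (s *\<^sub>R u + t *\<^sub>R v)"
      by (simp add: dist_norm algebra_simps)
    also have "\<dots> \<le> s * norm u + t * norm v"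
      using norm_triangle_ineq[of "s *\<^sub>R u" "t *\<^sub>R v"] that by simp
    also have "\<dots> \<le> r * norm u + r * norm v"
      using that by (intro add_mono mult_right_mono) auto
    also have "\<dots> \<le> r * M" using M r by (simp add: distrib_left[symmetric])
    also have "\<dots> < d" by (rule rM)
    finally show ?thesis .
  qed
  have inS: "z + s *\<^sub>R u + t *\<^sub>R v \<in> S" if "0 \<le> s" "s \<le> r" "0 \<le> t" "t \<le> r" for s t
    using pts[OF that] d d0 by (auto simp: dist_commute)
  define p where "p = (\<lambda>s. F ((z + r *\<^sub>R v) + s *\<^sub>R u) - F (z + s *\<^sub>R u))"
  have "\<exists>\<sigma>. 0 < \<sigma> \<and> \<sigma> < r \<and> p r - p 0 = (r - 0) * (Fu ((z + r *\<^sub>R v) + \<sigma> *\<^sub>R u) - Fu (z + \<sigma> *\<^sub>R u))"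
  proof (rule MVT2[OF r])
    fix s :: real assume s: "0 \<le> s" "s \<le> r"
    have i1: "(z + r *\<^sub>R v) + s *\<^sub>R u \<in> S" using inS[of s r] s r by (simp add: algebra_simps)
    have i2: "z + s *\<^sub>R u \<in> S" using inS[of s 0] s r by simp
    show "(p has_real_derivative (Fu ((z + r *\<^sub>R v) + s *\<^sub>R u) - Fu (z + s *\<^sub>R u))) (at s)"
      unfolding p_def Fu_def
      by (intro DERIV_diff line_D dF i1 i2)
  qed
  then obtain \<sigma> where \<sigma>: "0 < \<sigma>" "\<sigma> < r" "p r - p 0 = r * (Fu ((z + r *\<^sub>R v) + \<sigma> *\<^sub>R u) - Fu (z + \<sigma> *\<^sub>R u))"
    by auto
  define q where "q = (\<lambda>t. Fu ((z + \<sigma> *\<^sub>R u) + t *\<^sub>R v))"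
  have "\<exists>\<tau>. 0 < \<tau> \<and> \<tau> < r \<and> q r - q 0 = (r - 0) * A ((z + \<sigma> *\<^sub>R u) + \<tau> *\<^sub>R v)"
  proof (rule MVT2[OF r])
    fix t :: real assume t: "0 \<le> t" "t \<le> r"
    have i1: "(z + \<sigma> *\<^sub>R u) + t *\<^sub>R v \<in> S" using inS[of \<sigma> t] t \<sigma> by (simp add: algebra_simps)
    show "(q has_real_derivative A ((z + \<sigma> *\<^sub>R u) + t *\<^sub>R v)) (at t)"
      unfolding q_def A_def
      by (intro line_D) (unfold Fu_def, rule dFu[OF i1])
  qed
  then obtain \<tau> where \<tau>: "0 < \<tau>" "\<tau> < r" "q r - q 0 = r * A ((z + \<sigma> *\<^sub>R u) + \<tau> *\<^sub>R v)"
    by auto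
  define p2 where "p2 = (\<lambda>t. F ((z + r *\<^sub>R u) + t *\<^sub>R v) - F (z + t *\<^sub>R v))"
  have "\<exists>\<sigma>. 0 < \<sigma> \<and> \<sigma> < r \<and> p2 r - p2 0 = (r - 0) * (Fv ((z + r *\<^sub>R u) + \<sigma> *\<^sub>R v) - Fv (z + \<sigma> *\<^sub>R v))"
  proof (rule MVT2[OF r])
    fix s :: real assume s: "0 \<le> s" "s \<le> r"
    have i1: "(z + r *\<^sub>R u) + s *\<^sub>R v \<in> S" using inS[of r s] s r by (simp add: algebra_simps)
    have i2: "z + s *\<^sub>R v \<in> S" using inS[of 0 s] s r by simp
    show "(p2 has_real_derivative (Fv ((z + r *\<^sub>R u) + s *\<^sub>R v) - Fv (z + s *\<^sub>R v))) (at s)"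
      unfolding p2_def Fv_def
      by (intro DERIV_diff line_D dF i1 i2)
  qed
  then obtain \<sigma>' where \<sigma>': "0 < \<sigma>'" "\<sigma>' < r" "p2 r - p2 0 = r * (Fv ((z + r *\<^sub>R u) + \<sigma>' *\<^sub>R v) - Fv (z + \<sigma>' *\<^sub>R v))"
    by auto
  define q2 where "q2 = (\<lambda>t. Fv ((z + \<sigma>' *\<^sub>R v) + t *\<^sub>R u))"
  have "\<exists>\<tau>. 0 < \<tau> \<and> \<tau> < r \<and> q2 r - q2 0 = (r - 0) * B ((z + \<sigma>' *\<^sub>R v) + \<tau> *\<^sub>R u)"
  proof (rule MVT2[OF r])
    fix t :: real assume t: "0 \<le> t" "t \<le> r"
    have i1: "(z + \<sigma>' *\<^sub>R v) + t *\<^sub>R u \<in> S" using inS[of t \<sigma>'] t \<sigma>' by (simp add: algebra_simps)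
    show "(q2 has_real_derivative B ((z + \<sigma>' *\<^sub>R v) + t *\<^sub>R u)) (at t)"
      unfolding q2_def B_def
      by (intro line_D) (unfold Fv_def, rule dFv[OF i1])
  qed
  then obtain \<tau>' where \<tau>': "0 < \<tau>'" "\<tau>' < r" "q2 r - q2 0 = r * B ((z + \<sigma>' *\<^sub>R v) + \<tau>' *\<^sub>R u)"
    by auto
  have pp: "p r - p 0 = p2 r - p2 0"
    unfolding p_def p2_def by (simp add: algebra_simps)
  have qp: "Fu ((z + r *\<^sub>R v) + \<sigma> *\<^sub>R u) - Fu (z + \<sigma> *\<^sub>R u) = q r - q 0"
    unfolding q_def by (simp add: algebra_simps)
  have qp2: "Fv ((z + r *\<^sub>R u) + \<sigma>' *\<^sub>R v) - Fv (z + \<sigma>' *\<^sub>R v) = q2 r - q2 0"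
    unfolding q2_def by (simp add: algebra_simps)
  have "r * (r * A ((z + \<sigma> *\<^sub>R u) + \<tau> *\<^sub>R v)) = r * (r * B ((z + \<sigma>' *\<^sub>R v) + \<tau>' *\<^sub>R u))"
    using pp \<sigma>(3) \<tau>(3) \<sigma>'(3) \<tau>'(3) qp qp2 by simp
  then have AB: "A ((z + \<sigma> *\<^sub>R u) + \<tau> *\<^sub>R v) = B ((z + \<sigma>' *\<^sub>R v) + \<tau>' *\<^sub>R u)"
    using r by simp
  have "dist ((z + \<sigma> *\<^sub>R u) + \<tau> *\<^sub>R v) z < d" using pts[of \<sigma> \<tau>] \<sigma> \<tau> by simp
  then have 1: "dist (A ((z + \<sigma> *\<^sub>R u) + \<tau> *\<^sub>R v)) (A z) < e" using d1 d by simp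
  have "dist ((z + \<sigma>' *\<^sub>R v) + \<tau>' *\<^sub>R u) z < d" using pts[of \<tau>' \<sigma>'] \<sigma>' \<tau>' by (simp add: algebra_simps)
  then have 2: "dist (B ((z + \<sigma>' *\<^sub>R v) + \<tau>' *\<^sub>R u)) (B z) < e" using d2 d by simp
  have "\<bar>A z - B z\<bar> < 2 * e" using 1 2 AB unfolding dist_real_def by linarith
  then show False unfolding e_def by simp
qed




lemma schwarz_sm:
  assumes "open S" "smooth_on S F" "z \<in> S"
  shows "frechet_derivative (\<lambda>w. frechet_derivative F (at w) u) (at z) v
       = frechet_derivative (\<lambda>w. frechet_derivative F (at w) v) (at z) u"
  by (rule schwarz[OF assms(1,3)])
     (auto intro!: sm_diffble[OF assms(1)] sm_isCont[OF assms(1)] sm_deriv assms(2) assms(3))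

lemma matrix_inv_both:
  fixes A :: "real^'n^'n"
  assumes "det A \<noteq> 0"
  shows "A ** matrix_inv A = mat 1" "matrix_inv A ** A = mat 1"
proof -
  have "invertible A" using assms invertible_det_nz by blast
  then have "\<exists>A'. A ** A' = mat 1 \<and> A' ** A = mat 1" unfolding invertible_def .
  then have "A ** matrix_inv A = mat 1 \<and> matrix_inv A ** A = mat 1"
    unfolding matrix_inv_def by (rule someI_ex)
  then show "A ** matrix_inv A = mat 1" "matrix_inv A ** A = mat 1" by auto
qed

lemma matrix_inv_cramer:
  fixes A :: "real^'n^'n"
  assumes "det A \<noteq> 0"
  shows "matrix_inv A $ a $ b = det (\<chi> i j. if j = a then axis b 1 $ i else A $ i $ j) / det A"
proof -
  have "A *v (matrix_inv A *v axis b 1) = axis b 1"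
    using matrix_inv_both(1)[OF assms] by (simp add: matrix_vector_mul_assoc)
  then have "matrix_inv A *v axis b 1 = (\<chi> k. det (\<chi> i j. if j = k then axis b 1 $ i else A $ i $ j) / det A)"
    using cramer[OF assms] by blast
  then have "(matrix_inv A *v axis b 1) $ a = det (\<chi> i j. if j = a then axis b 1 $ i else A $ i $ j) / det A"
    by simp
  moreover have "(matrix_inv A *v axis b 1) $ a = matrix_inv A $ a $ b"
    by (simp add: matrix_vector_mult_def axis_def if_distrib cong: if_cong)
  ultimately show ?thesis by simp
qed

locale fins =
  fixes U :: "(real^'n::finite) set" and L :: "'n pt \<Rightarrow> real"
  assumes U_open: "open U"
    and L_smooth: "smooth_on (U \<times> (UNIV - {0})) L"
    and L_hom: "\<And>x y t. x \<in> U \<Longrightarrow> y \<noteq> 0 \<Longrightarrow> t > 0 \<Longrightarrow> L (x, t *\<^sub>R y) = t\<^sup>2 * L (x, y)"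
    and L_nondeg: "\<And>z. z \<in> U \<times> (UNIV - {0}) \<Longrightarrow> det (gmat L z) \<noteq> 0"
begin

abbreviation "E \<equiv> U \<times> (UNIV - {0::real^'n})"
abbreviation "sm F \<equiv> smooth_on E F"

lemma E_open: "open E"
  using U_open by (intro open_Times open_Diff) auto

lemmas smI = sm_add[OF E_open] sm_mult[OF E_open] sm_diff[OF E_open] sm_scale[OF E_open]
  sm_sum[OF E_open] sm_prod[OF E_open] sm_const sm_deriv

lemma sm_px: "sm F \<Longrightarrow> sm (px \<mu> F)"
  unfolding px_def by (rule sm_deriv)
lemma sm_py: "sm F \<Longrightarrow> sm (py \<mu> F)"
  unfolding py_def by (rule sm_deriv)
lemma sm_snd: "sm (\<lambda>w. snd w $ i)"
proof -
  have "bounded_linear (\<lambda>w::'n pt. snd w $ i)"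
    by (intro bounded_linear_compose[OF bounded_linear_vec_nth] bounded_linear_snd)
  then show ?thesis by (rule sm_linear)
qed

lemma diffE: "sm F \<Longrightarrow> w \<in> E \<Longrightarrow> F differentiable (at w)"
  by (rule sm_diffble[OF E_open])

lemma glow_eq: "(\<lambda>w. glow L w a b) = py a (py b L)"
  by (auto simp: glow_def gmat_def)

lemma sm_L: "sm L" using L_smooth .
lemma sm_glow: "sm (\<lambda>w. glow L w a b)"
  unfolding glow_eq by (intro sm_py sm_L)

lemma sm_gmat: "sm (\<lambda>w. gmat L w $ a $ b)"
  using sm_glow[of a b] unfolding glow_def .

lemma sm_if: "sm F \<Longrightarrow> sm (\<lambda>w. if c then k else F w)"
  by (cases c) (simp_all add: sm_const)

lemma sm_det: "sm (\<lambda>w. det (gmat L w))"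
proof -
  have "sm (\<lambda>w. \<Sum>p\<in>{p. p permutes (UNIV::'n set)}. of_int (sign p) * (\<Prod>i\<in>UNIV. gmat L w $ i $ p i))"
    by (intro smI finite_permutations sm_gmat, simp_all)
  then show ?thesis unfolding det_def .
qed

lemma sm_gup: "sm (\<lambda>w. gup L w a b)"
proof (rule sm_cong[OF E_open])
  show "sm (\<lambda>w. det (\<chi> i j. if j = a then axis b 1 $ i else gmat L w $ i $ j) / det (gmat L w))"
  proof (rule sm_divide[OF E_open _ sm_det L_nondeg])
    have "sm (\<lambda>w. \<Sum>p\<in>{p. p permutes (UNIV::'n set)}. of_int (sign p) *
          (\<Prod>i\<in>UNIV. (if p i = a then axis b 1 $ i else gmat L w $ i $ (p i))))"
      by (intro smI finite_permutations sm_if sm_gmat, simp_all)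
    then show "sm (\<lambda>w. det (\<chi> i j. if j = a then axis b 1 $ i else gmat L w $ i $ j))"
      unfolding det_def by simp
  qed
  fix w assume "w \<in> E"
  then show "det (\<chi> i j. if j = a then axis b 1 $ i else gmat L w $ i $ j) / det (gmat L w) = gup L w a b"
    using matrix_inv_cramer[OF L_nondeg] unfolding gup_def by simp
qed

end



lemma delta_l[simp]: "(\<Sum>r\<in>(UNIV::'k::finite set). (if a = r then 1 else 0) * (T r::real)) = T a"
proof -
  have "(\<Sum>r\<in>(UNIV::'k set). (if a = r then 1 else 0) * (T r::real)) = (\<Sum>r\<in>UNIV. if a = r then T r else 0)"
    by (rule sum.cong) auto
  then show ?thesis by simp
qed
lemma delta_l'[simp]: "(\<Sum>r\<in>(UNIV::'k::finite set). (if r = a then 1 else 0) * (T r::real)) = T a"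
proof -
  have "(\<Sum>r\<in>(UNIV::'k set). (if r = a then 1 else 0) * (T r::real)) = (\<Sum>r\<in>UNIV. if r = a then T r else 0)"
    by (rule sum.cong) auto
  then show ?thesis by simp
qed
lemma delta_r[simp]: "(\<Sum>r\<in>(UNIV::'k::finite set). (T r::real) * (if r = a then 1 else 0)) = T a"
proof -
  have "(\<Sum>r\<in>(UNIV::'k set). (T r::real) * (if r = a then 1 else 0)) = (\<Sum>r\<in>UNIV. if r = a then T r else 0)"
    by (rule sum.cong) auto
  then show ?thesis by simp
qed
lemma delta_r'[simp]: "(\<Sum>r\<in>(UNIV::'k::finite set). (T r::real) * (if a = r then 1 else 0)) = T a"
proof -
  have "(\<Sum>r\<in>(UNIV::'k set). (T r::real) * (if a = r then 1 else 0)) = (\<Sum>r\<in>UNIV. if a = r then T r else 0)"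
    by (rule sum.cong) auto
  then show ?thesis by simp
qed

context fins begin

lemma smsum: "(\<And>i. sm (F i)) \<Longrightarrow> sm (\<lambda>z. \<Sum>i\<in>(UNIV::'n set). F i z)"
  by (rule sm_sum[OF E_open finite])

abbreviation "ex m \<equiv> (axis m (1::real), 0::real^'n)"
abbreviation "ey m \<equiv> (0::real^'n, axis m (1::real))"

lemma sm_Dv: "sm F \<Longrightarrow> sm (\<lambda>w. frechet_derivative F (at w) v)" by (rule sm_deriv)

lemma D_add: "sm F \<Longrightarrow> sm G \<Longrightarrow> w \<in> E \<Longrightarrow>
  frechet_derivative (\<lambda>w. F w + G w) (at w) v = frechet_derivative F (at w) v + frechet_derivative G (at w) v"
  by (rule fd_add[OF diffE diffE])
lemma D_diff: "sm F \<Longrightarrow> sm G \<Longrightarrow> w \<in> E \<Longrightarrow>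
  frechet_derivative (\<lambda>w. F w - G w) (at w) v = frechet_derivative F (at w) v - frechet_derivative G (at w) v"
  by (rule fd_diff[OF diffE diffE])
lemma D_mult: "sm F \<Longrightarrow> sm G \<Longrightarrow> w \<in> E \<Longrightarrow>
  frechet_derivative (\<lambda>w. F w * G w) (at w) v = frechet_derivative F (at w) v * G w + F w * frechet_derivative G (at w) v"
  by (rule fd_mult[OF diffE diffE])
lemma D_sum: "(\<And>i. sm (F i)) \<Longrightarrow> w \<in> E \<Longrightarrow>
  frechet_derivative (\<lambda>w. \<Sum>i\<in>(I::'n set). F i w) (at w) v = (\<Sum>i\<in>I. frechet_derivative (F i) (at w) v)"
  by (rule fd_sum[OF finite diffE])
lemma D_scale: "sm F \<Longrightarrow> w \<in> E \<Longrightarrow>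
  frechet_derivative (\<lambda>w. c * F w) (at w) v = c * frechet_derivative F (at w) v"
  by (rule fd_scale[OF diffE])
lemma D_snd: "frechet_derivative (\<lambda>w::'n pt. snd w $ i) (at w) v = snd v $ i"
proof -
  have "bounded_linear (\<lambda>w::'n pt. snd w $ i)"
    by (intro bounded_linear_compose[OF bounded_linear_vec_nth] bounded_linear_snd)
  then show ?thesis using fd_eq[OF bounded_linear_imp_has_derivative] by blast
qed
lemma D_cong: "w \<in> E \<Longrightarrow> (\<And>w. w \<in> E \<Longrightarrow> F w = G w) \<Longrightarrow>
  frechet_derivative F (at w) v = frechet_derivative G (at w) v"
  by (rule fun_cong[OF fd_cong[OF E_open]])

lemma px_cong: "w \<in> E \<Longrightarrow> (\<And>w. w \<in> E \<Longrightarrow> F w = G w) \<Longrightarrow> px m F w = px m G w"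
  unfolding px_def by (rule D_cong)
lemma py_cong: "w \<in> E \<Longrightarrow> (\<And>w. w \<in> E \<Longrightarrow> F w = G w) \<Longrightarrow> py m F w = py m G w"
  unfolding py_def by (rule D_cong)
lemma dlt_cong: "w \<in> E \<Longrightarrow> (\<And>w. w \<in> E \<Longrightarrow> F w = G w) \<Longrightarrow> dlt L m F w = dlt L m G w"
proof -
  assume w: "w \<in> E" and e: "\<And>w. w \<in> E \<Longrightarrow> F w = G w"
  have "px m F w = px m G w" by (rule px_cong[OF w e])
  moreover have "py \<nu> F w = py \<nu> G w" for \<nu> by (rule py_cong[OF w e])
  ultimately show ?thesis unfolding dlt_def by simp
qed

lemma comm_yy: "sm F \<Longrightarrow> w \<in> E \<Longrightarrow> py a (py b F) w = py b (py a F) w"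
  unfolding py_def by (rule schwarz_sm[OF E_open])
lemma comm_xy: "sm F \<Longrightarrow> w \<in> E \<Longrightarrow> px a (py b F) w = py b (px a F) w"
  unfolding py_def px_def by (rule schwarz_sm[OF E_open])

lemma g_sym: "w \<in> E \<Longrightarrow> glow L w a b = glow L w b a"
  unfolding glow_def gmat_def using comm_yy[OF sm_L] by simp

lemma sm_Gspray: "sm (\<lambda>w. Gspray L w \<alpha>)"
  unfolding Gspray_def
  by (intro smsum smI sm_gup sm_px sm_py sm_L sm_snd)
lemma sm_N: "sm (\<lambda>w. Nconn L w \<alpha> \<mu>)"
proof -
  have "(\<lambda>w. Nconn L w \<alpha> \<mu>) = py \<mu> (\<lambda>w. Gspray L w \<alpha>)" by (auto simp: Nconn_def)
  then show ?thesis using sm_py[OF sm_Gspray] by simp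
qed
lemma sm_B: "sm (\<lambda>w. Berwald L w \<alpha> \<mu> \<nu>)"
proof -
  have "(\<lambda>w. Berwald L w \<alpha> \<mu> \<nu>) = py \<nu> (\<lambda>w. Nconn L w \<alpha> \<mu>)" by (auto simp: Berwald_def)
  then show ?thesis using sm_py[OF sm_N] by simp
qed
lemma dlt_eq: "dlt L \<mu> F = (\<lambda>z. px \<mu> F z - (\<Sum>\<nu>\<in>UNIV. Nconn L z \<nu> \<mu> * py \<nu> F z))"
  by (auto simp: dlt_def)
lemma sm_dlt: "sm F \<Longrightarrow> sm (dlt L \<mu> F)"
  unfolding dlt_eq by (intro smsum smI sm_N sm_px sm_py)

definition Vd :: "'n pt \<Rightarrow> 'n \<Rightarrow> 'n pt" where
  "Vd w \<mu> = ex \<mu> - (\<Sum>\<nu>\<in>UNIV. Nconn L w \<nu> \<mu> *\<^sub>R ey \<nu>)"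

lemma dlt_fd: "sm F \<Longrightarrow> w \<in> E \<Longrightarrow> dlt L \<mu> F w = frechet_derivative F (at w) (Vd w \<mu>)"
proof -
  assume a: "sm F" and w: "w \<in> E"
  have "frechet_derivative F (at w) (Vd w \<mu>) = frechet_derivative F (at w) (ex \<mu>) - frechet_derivative F (at w) (\<Sum>\<nu>\<in>UNIV. Nconn L w \<nu> \<mu> *\<^sub>R ey \<nu>)"
    unfolding Vd_def by (rule fd_lin_diff[OF diffE[OF a w]])
  also have "frechet_derivative F (at w) (\<Sum>\<nu>\<in>UNIV. Nconn L w \<nu> \<mu> *\<^sub>R ey \<nu>) = (\<Sum>\<nu>\<in>UNIV. frechet_derivative F (at w) (Nconn L w \<nu> \<mu> *\<^sub>R ey \<nu>))"
    by (rule fd_lin_sum[OF diffE[OF a w]])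
  also have "\<dots> = (\<Sum>\<nu>\<in>UNIV. Nconn L w \<nu> \<mu> * frechet_derivative F (at w) (ey \<nu>))"
    by (rule sum.cong[OF refl], rule fd_lin_scale[OF diffE[OF a w]])
  finally show ?thesis unfolding dlt_def px_def py_def by simp
qed

lemma hg: "w \<in> E \<Longrightarrow> (\<Sum>b\<in>UNIV. gup L w a b * glow L w b c) = (if a = c then 1 else 0)"
  using matrix_inv_both(2)[OF L_nondeg, of w]
  unfolding gup_def glow_def by (auto simp: vec_eq_iff matrix_matrix_mult_def mat_def)
lemma gh: "w \<in> E \<Longrightarrow> (\<Sum>b\<in>UNIV. glow L w a b * gup L w b c) = (if a = c then 1 else 0)"
  using matrix_inv_both(1)[OF L_nondeg, of w]
  unfolding gup_def glow_def by (auto simp: vec_eq_iff matrix_matrix_mult_def mat_def)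

lemma h_sym: assumes w: "w \<in> E" shows "gup L w a b = gup L w b a"
proof -
  define A where "A = gmat L w"
  define M where "M = matrix_inv A"
  have At: "transpose A = A"
    using g_sym[OF w] by (auto simp: vec_eq_iff transpose_def A_def glow_def)
  have AM: "A ** M = mat 1" "M ** A = mat 1" unfolding A_def M_def using matrix_inv_both L_nondeg w by auto
  have "transpose M ** A = transpose (transpose A ** M)"
    by (simp add: matrix_transpose_mul)
  also have "\<dots> = mat 1" using AM At by simp
  finally have XA: "transpose M ** A = mat 1" .
  have "transpose M = transpose M ** (A ** M)" using AM by simp
  also have "\<dots> = M" using XA by (simp add: matrix_mul_assoc)
  finally have "transpose M = M" .
  moreover have "transpose M $ a $ b = M $ b $ a" by (simp add: transpose_def)
  ultimately show ?thesis unfolding gup_def M_def A_def by simp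
qed

lemma hg_contract: "w \<in> E \<Longrightarrow> (\<Sum>b\<in>UNIV. gup L w a b * (\<Sum>r\<in>UNIV. glow L w b r * T r)) = T a"
proof -
  assume w: "w \<in> E"
  have "(\<Sum>b\<in>UNIV. gup L w a b * (\<Sum>r\<in>UNIV. glow L w b r * T r)) = (\<Sum>b\<in>UNIV. \<Sum>r\<in>UNIV. gup L w a b * glow L w b r * T r)"
    by (simp add: sum_distrib_left mult.assoc)
  also have "\<dots> = (\<Sum>r\<in>UNIV. \<Sum>b\<in>UNIV. gup L w a b * glow L w b r * T r)" by (rule sum.swap)
  also have "\<dots> = (\<Sum>r\<in>UNIV. (\<Sum>b\<in>UNIV. gup L w a b * glow L w b r) * T r)" by (simp add: sum_distrib_right)
  also have "\<dots> = T a" using hg[OF w] by simp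
  finally show ?thesis .
qed
lemma gh_contract: "w \<in> E \<Longrightarrow> (\<Sum>b\<in>UNIV. glow L w a b * (\<Sum>r\<in>UNIV. gup L w b r * T r)) = T a"
proof -
  assume w: "w \<in> E"
  have "(\<Sum>b\<in>UNIV. glow L w a b * (\<Sum>r\<in>UNIV. gup L w b r * T r)) = (\<Sum>b\<in>UNIV. \<Sum>r\<in>UNIV. glow L w a b * gup L w b r * T r)"
    by (simp add: sum_distrib_left mult.assoc)
  also have "\<dots> = (\<Sum>r\<in>UNIV. \<Sum>b\<in>UNIV. glow L w a b * gup L w b r * T r)" by (rule sum.swap)
  also have "\<dots> = (\<Sum>r\<in>UNIV. (\<Sum>b\<in>UNIV. glow L w a b * gup L w b r) * T r)" by (simp add: sum_distrib_right)
  also have "\<dots> = T a" using gh[OF w] by simp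
  finally show ?thesis .
qed

lemma D_gup: assumes w: "w \<in> E"
  shows "frechet_derivative (\<lambda>w. gup L w a e) (at w) v =
     - (\<Sum>b\<in>UNIV. \<Sum>c\<in>UNIV. gup L w a b * frechet_derivative (\<lambda>w. glow L w b c) (at w) v * gup L w c e)"
proof -
  let ?Dh = "\<lambda>b. frechet_derivative (\<lambda>w. gup L w a b) (at w) v"
  let ?Dg = "\<lambda>b c. frechet_derivative (\<lambda>w. glow L w b c) (at w) v"
  have z: "(\<Sum>b\<in>UNIV. ?Dh b * glow L w b c) = - (\<Sum>b\<in>UNIV. gup L w a b * ?Dg b c)" for c
  proof -
    have "frechet_derivative (\<lambda>w. \<Sum>b\<in>UNIV. gup L w a b * glow L w b c) (at w) v
        = frechet_derivative (\<lambda>w. if a = c then 1 else 0) (at w) v"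
      by (rule D_cong[OF w]) (rule hg)
    then have "(\<Sum>b\<in>UNIV. ?Dh b * glow L w b c + gup L w a b * ?Dg b c) = 0"
      using w by (simp add: D_sum D_mult sm_gup sm_glow sm_mult[OF E_open])
    then show ?thesis by (simp add: sum.distrib eq_neg_iff_add_eq_0)
  qed
  have "?Dh e = (\<Sum>b\<in>UNIV. ?Dh b * (if b = e then 1 else 0))" by (rule delta_r[symmetric])
  also have "\<dots> = (\<Sum>b\<in>UNIV. ?Dh b * (\<Sum>c\<in>UNIV. glow L w b c * gup L w c e))" using gh[OF w] by simp
  also have "\<dots> = (\<Sum>b\<in>UNIV. \<Sum>c\<in>UNIV. ?Dh b * glow L w b c * gup L w c e)" by (simp add: sum_distrib_left mult.assoc)
  also have "\<dots> = (\<Sum>c\<in>UNIV. \<Sum>b\<in>UNIV. ?Dh b * glow L w b c * gup L w c e)" by (rule sum.swap)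
  also have "\<dots> = (\<Sum>c\<in>UNIV. (\<Sum>b\<in>UNIV. ?Dh b * glow L w b c) * gup L w c e)" by (simp add: sum_distrib_right)
  also have "\<dots> = (\<Sum>c\<in>UNIV. - (\<Sum>b\<in>UNIV. gup L w a b * ?Dg b c) * gup L w c e)" using z by simp
  also have "\<dots> = - (\<Sum>c\<in>UNIV. \<Sum>b\<in>UNIV. gup L w a b * ?Dg b c * gup L w c e)" by (simp add: sum_distrib_right sum_negf)
  also have "\<dots> = - (\<Sum>b\<in>UNIV. \<Sum>c\<in>UNIV. gup L w a b * ?Dg b c * gup L w c e)" by (subst sum.swap) simp
  finally show ?thesis .
qed

end



lemma axis_nth': "axis m (1::real) $ i = (if i = m then 1 else 0)"
  by (simp add: axis_def)

lemma vec_decomp0: "(y::real^'k::finite) = (\<Sum>a\<in>UNIV. y $ a *\<^sub>R axis a 1)"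
  by (simp add: vec_eq_iff axis_nth')
lemma vec_decomp1: "(y::real^'k::finite) = (\<Sum>a\<in>UNIV. y $ a *\<^sub>R axis a 1) \<Longrightarrow> (0::real^'k::finite, y) = (\<Sum>a\<in>UNIV. y $ a *\<^sub>R (0::real^'k, axis a (1::real)))"
  by (simp add: prod_eq_iff fst_sum snd_sum)
lemma vec_decomp: "(0::real^'k::finite, y) = (\<Sum>a\<in>UNIV. y $ a *\<^sub>R (0::real^'k::finite, axis a (1::real)))"
  by (simp add: prod_eq_iff fst_sum snd_sum vec_decomp0[symmetric])


context fins begin

lemma sm_divc: "sm F \<Longrightarrow> sm (\<lambda>w. F w / c)"
  using sm_scale[OF E_open, of F "1/c"] by simp

lemmas smS = sm_mult[OF E_open] sm_add[OF E_open] sm_diff[OF E_open] sm_scale[OF E_open] smsum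
  sm_px sm_py sm_L sm_snd sm_glow sm_gup sm_Gspray sm_N sm_B sm_const sm_dlt sm_divc

lemma py_add: "sm F \<Longrightarrow> sm G \<Longrightarrow> w \<in> E \<Longrightarrow> py m (\<lambda>w. F w + G w) w = py m F w + py m G w"
  unfolding py_def by (rule D_add)
lemma py_diff: "sm F \<Longrightarrow> sm G \<Longrightarrow> w \<in> E \<Longrightarrow> py m (\<lambda>w. F w - G w) w = py m F w - py m G w"
  unfolding py_def by (rule D_diff)
lemma py_mult: "sm F \<Longrightarrow> sm G \<Longrightarrow> w \<in> E \<Longrightarrow> py m (\<lambda>w. F w * G w) w = py m F w * G w + F w * py m G w"
  unfolding py_def by (rule D_mult)
lemma py_sum: "(\<And>i. sm (F i)) \<Longrightarrow> w \<in> E \<Longrightarrow> py m (\<lambda>w. \<Sum>i\<in>(UNIV::'n set). F i w) w = (\<Sum>i\<in>UNIV. py m (F i) w)"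
  unfolding py_def by (rule D_sum)
lemma py_scale: "sm F \<Longrightarrow> w \<in> E \<Longrightarrow> py m (\<lambda>w. c * F w) w = c * py m F w"
  unfolding py_def by (rule D_scale)
lemma py_snd: "py m (\<lambda>w::'n pt. snd w $ i) w = (if i = m then 1 else 0)"
  unfolding py_def by (subst D_snd) (simp add: axis_nth')
lemma py_const: "py m (\<lambda>w. c) w = 0"
  unfolding py_def by simp

lemma px_add: "sm F \<Longrightarrow> sm G \<Longrightarrow> w \<in> E \<Longrightarrow> px m (\<lambda>w. F w + G w) w = px m F w + px m G w"
  unfolding px_def by (rule D_add)
lemma px_diff: "sm F \<Longrightarrow> sm G \<Longrightarrow> w \<in> E \<Longrightarrow> px m (\<lambda>w. F w - G w) w = px m F w - px m G w"
  unfolding px_def by (rule D_diff)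
lemma px_mult: "sm F \<Longrightarrow> sm G \<Longrightarrow> w \<in> E \<Longrightarrow> px m (\<lambda>w. F w * G w) w = px m F w * G w + F w * px m G w"
  unfolding px_def by (rule D_mult)
lemma px_sum: "(\<And>i. sm (F i)) \<Longrightarrow> w \<in> E \<Longrightarrow> px m (\<lambda>w. \<Sum>i\<in>(UNIV::'n set). F i w) w = (\<Sum>i\<in>UNIV. px m (F i) w)"
  unfolding px_def by (rule D_sum)
lemma px_scale: "sm F \<Longrightarrow> w \<in> E \<Longrightarrow> px m (\<lambda>w. c * F w) w = c * px m F w"
  unfolding px_def by (rule D_scale)
lemma px_snd: "px m (\<lambda>w::'n pt. snd w $ i) w = 0"
  unfolding px_def by (subst D_snd) simp
lemma px_const: "px m (\<lambda>w. c) w = 0"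
  unfolding px_def by simp

lemma py_divide: "sm F \<Longrightarrow> w \<in> E \<Longrightarrow> py m (\<lambda>w. F w / c) w = py m F w / c"
  using py_scale[of F w m "1/c"] by simp
lemma px_divide: "sm F \<Longrightarrow> w \<in> E \<Longrightarrow> px m (\<lambda>w. F w / c) w = px m F w / c"
  using px_scale[of F w m "1/c"] by simp
lemmas pdrules = py_divide px_divide py_add py_diff py_mult py_sum py_scale py_snd py_const
   px_add px_diff px_mult px_sum px_scale px_snd px_const

lemma py_py_L: "py a (py b L) w = glow L w a b"
  by (simp add: glow_def gmat_def)
lemma py_G: "py k (\<lambda>w. Gspray L w j) w = Nconn L w j k"
  by (simp add: Nconn_def)
lemma py_N: "py k (\<lambda>w. Nconn L w j m) w = Berwald L w j m k"
  by (simp add: Berwald_def)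

lemma eu_t1: "w \<in> E \<Longrightarrow> w = (x, y) \<Longrightarrow> L differentiable (at ((x, 0) + 1 *\<^sub>R (0, y)))"
  using diffE[OF sm_L] by simp
lemma eu_t2: "((\<lambda>t. t ^ 2 * L (x, y)) has_real_derivative 2 * L (x, y)) (at 1)"
    using DERIV_cmult_right[OF DERIV_pow[of 2 1 UNIV], of "L (x, y)"] by simp
lemma eu_t3: "x \<in> U \<Longrightarrow> y \<noteq> 0 \<Longrightarrow> t \<in> {0<..} \<Longrightarrow> t ^ 2 * L (x, y) = L ((x, 0) + t *\<^sub>R (0, y))"
  using L_hom by simp
lemma eu_t5: "w = (x,y) \<Longrightarrow> frechet_derivative L (at ((x, 0) + 1 *\<^sub>R (0, y))) (0, y) = 2 * L (x, y) \<Longrightarrow> frechet_derivative L (at w) (0, y) = 2 * L w"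
  by simp
lemma eu_t6: "w = (x,y) \<Longrightarrow> frechet_derivative L (at w) (0, y) = (\<Sum>a\<in>UNIV. y $ a * frechet_derivative L (at w) (ey a))
 \<Longrightarrow> frechet_derivative L (at w) (0, y) = (\<Sum>a\<in>UNIV. py a L w * snd w $ a)"
  by (simp add: py_def mult.commute)

lemma euler: assumes w: "w \<in> E" shows "(\<Sum>a\<in>UNIV. py a L w * snd w $ a) = 2 * L w"
proof -
  obtain x y where xy0: "w = (x, y)" by (cases w)
  have xU: "x \<in> U" and y0: "y \<noteq> 0" using w xy0 by (simp_all add: mem_Times_iff)
  have D1: "((\<lambda>t. L ((x, 0) + t *\<^sub>R (0, y))) has_real_derivative
      frechet_derivative L (at ((x, 0) + 1 *\<^sub>R (0, y))) (0, y)) (at 1)"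
    by (rule line_D[OF eu_t1[OF w xy0]])
  have D3: "((\<lambda>t. L ((x, 0) + t *\<^sub>R (0, y))) has_real_derivative 2 * L (x, y)) (at 1)"
    by (rule has_field_derivative_transform_within_open[OF eu_t2 open_greaterThan _ eu_t3[OF xU y0]]) simp_all
  have e1: "frechet_derivative L (at w) (0, y) = 2 * L w"
    by (rule eu_t5[OF xy0 DERIV_unique[OF D1 D3]])
  have "frechet_derivative L (at w) (0, y) = (\<Sum>a\<in>UNIV. frechet_derivative L (at w) (y $ a *\<^sub>R ey a))"
    by (subst vec_decomp, rule fd_lin_sum[OF diffE[OF sm_L w]])
  also have "\<dots> = (\<Sum>a\<in>UNIV. y $ a * frechet_derivative L (at w) (ey a))"
    by (rule sum.cong[OF refl], rule fd_lin_scale[OF diffE[OF sm_L w]])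
  finally have e2: "frechet_derivative L (at w) (0, y) = (\<Sum>a\<in>UNIV. py a L w * snd w $ a)"
    by (rule eu_t6[OF xy0])
  show ?thesis using e1 e2 by simp
qed

lemma euler_y: assumes w: "w \<in> E" shows "(\<Sum>a\<in>UNIV. glow L w j a * snd w $ a) = py j L w"
proof -
  have "py j (\<lambda>w. \<Sum>a\<in>UNIV. py a L w * snd w $ a) w = py j (\<lambda>w. 2 * L w) w"
    by (rule py_cong[OF w euler])
  then have "(\<Sum>a\<in>UNIV. glow L w j a * snd w $ a + py a L w * (if a = j then 1 else 0)) = 2 * py j L w"
    using w by (simp add: pdrules smS py_py_L)
  then show ?thesis by (simp add: sum.distrib)
qed

lemma euler_x: assumes w: "w \<in> E" shows "(\<Sum>a\<in>UNIV. px m (py a L) w * snd w $ a) = 2 * px m L w"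
proof -
  have "px m (\<lambda>w. \<Sum>a\<in>UNIV. py a L w * snd w $ a) w = px m (\<lambda>w. 2 * L w) w"
    by (rule px_cong[OF w euler])
  then show ?thesis using w by (simp add: pdrules smS)
qed

end



lemma sum3_rot: "(\<Sum>b\<in>B. \<Sum>c\<in>C. \<Sum>a\<in>A. F a b c) = (\<Sum>a\<in>A. \<Sum>b\<in>B. \<Sum>c\<in>C. (F a b c :: real))"
proof -
  have "(\<Sum>b\<in>B. \<Sum>c\<in>C. \<Sum>a\<in>A. F a b c) = (\<Sum>b\<in>B. \<Sum>a\<in>A. \<Sum>c\<in>C. F a b c)"
    by (rule sum.cong[OF refl], rule sum.swap)
  also have "\<dots> = (\<Sum>a\<in>A. \<Sum>b\<in>B. \<Sum>c\<in>C. F a b c)" by (rule sum.swap)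
  finally show ?thesis .
qed

context fins begin

lemma gG: assumes w: "w \<in> E"
  shows "(\<Sum>j\<in>UNIV. glow L w i j * Gspray L w j) =
    (1/2) * ((\<Sum>m\<in>UNIV. px m (py i L) w * snd w $ m) - px i L w)"
proof -
  define K where "K = (\<lambda>\<delta>. (\<Sum>\<gamma>\<in>UNIV. px \<gamma> (py \<delta> L) w * (snd w $ \<gamma>)) - px \<delta> L w)"
  have "Gspray L w j = (1/2) * (\<Sum>\<delta>\<in>UNIV. gup L w j \<delta> * K \<delta>)" for j
    unfolding Gspray_def K_def by simp
  then have "(\<Sum>j\<in>UNIV. glow L w i j * Gspray L w j) = (1/2) * (\<Sum>j\<in>UNIV. glow L w i j * (\<Sum>\<delta>\<in>UNIV. gup L w j \<delta> * K \<delta>))"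
    by (simp add: sum_distrib_left mult_ac)
  also have "\<dots> = (1/2) * K i" using gh_contract[OF w] by simp
  finally show ?thesis unfolding K_def .
qed

lemma GL: assumes w: "w \<in> E"
  shows "(\<Sum>j\<in>UNIV. Gspray L w j * py j L w) = (1/2) * (\<Sum>m\<in>UNIV. px m L w * snd w $ m)"
proof -
  define y where "y = snd w"
  have "(\<Sum>j\<in>UNIV. Gspray L w j * py j L w) = (\<Sum>j\<in>UNIV. \<Sum>i\<in>UNIV. Gspray L w j * glow L w j i * y $ i)"
    by (simp add: euler_y[OF w, symmetric] sum_distrib_left mult.assoc y_def)
  also have "\<dots> = (\<Sum>i\<in>UNIV. \<Sum>j\<in>UNIV. Gspray L w j * glow L w j i * y $ i)" by (rule sum.swap)
  also have "\<dots> = (\<Sum>i\<in>UNIV. y $ i * (\<Sum>j\<in>UNIV. glow L w i j * Gspray L w j))"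
    by (simp add: sum_distrib_left g_sym[OF w] mult_ac)
  also have "\<dots> = (\<Sum>i\<in>UNIV. y $ i * ((1/2) * ((\<Sum>m\<in>UNIV. px m (py i L) w * y $ m) - px i L w)))"
    by (simp add: gG[OF w] y_def)
  also have "\<dots> = (1/2) * (\<Sum>i\<in>UNIV. y $ i * (\<Sum>m\<in>UNIV. px m (py i L) w * y $ m)) - (1/2) * (\<Sum>i\<in>UNIV. y $ i * px i L w)"
    by (simp add: sum_distrib_left right_diff_distrib sum_subtractf mult_ac)
  also have "(\<Sum>i\<in>UNIV. y $ i * (\<Sum>m\<in>UNIV. px m (py i L) w * y $ m)) = (\<Sum>m\<in>UNIV. y $ m * (2 * px m L w))"
  proof -
    have "(\<Sum>i\<in>UNIV. y $ i * (\<Sum>m\<in>UNIV. px m (py i L) w * y $ m)) = (\<Sum>i\<in>UNIV. \<Sum>m\<in>UNIV. y $ i * px m (py i L) w * y $ m)"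
      by (simp add: sum_distrib_left mult.assoc)
    also have "\<dots> = (\<Sum>m\<in>UNIV. \<Sum>i\<in>UNIV. y $ i * px m (py i L) w * y $ m)" by (rule sum.swap)
    also have "\<dots> = (\<Sum>m\<in>UNIV. y $ m * (\<Sum>i\<in>UNIV. px m (py i L) w * y $ i))"
      by (simp add: sum_distrib_left mult_ac)
    also have "\<dots> = (\<Sum>m\<in>UNIV. y $ m * (2 * px m L w))"
      using euler_x[OF w] by (simp add: y_def)
    finally show ?thesis .
  qed
  finally show ?thesis by (simp add: y_def sum_distrib_left mult_ac)
qed

lemma DL: assumes w: "w \<in> E"
  shows "(\<Sum>j\<in>UNIV. Nconn L w j k * py j L w) = px k L w"
proof -
  have "py k (\<lambda>w. \<Sum>j\<in>UNIV. Gspray L w j * py j L w) w = py k (\<lambda>w. (1/2) * (\<Sum>m\<in>UNIV. px m L w * snd w $ m)) w"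
    by (rule py_cong[OF w GL])
  then have e: "(\<Sum>j\<in>UNIV. Nconn L w j k * py j L w + Gspray L w j * glow L w k j)
      = (1/2) * (\<Sum>m\<in>UNIV. py k (px m L) w * snd w $ m + px m L w * (if m = k then 1 else 0))"
    using w by (simp add: pdrules smS py_G py_py_L)
  have c: "py k (px m L) w = px m (py k L) w" for m using comm_xy[OF sm_L w] by simp
  have gk: "(\<Sum>j\<in>UNIV. Gspray L w j * glow L w k j) = (1/2) * ((\<Sum>m\<in>UNIV. px m (py k L) w * snd w $ m) - px k L w)"
    using gG[OF w, of k] by (simp add: mult.commute)
  have e1: "(\<Sum>j\<in>UNIV. Nconn L w j k * py j L w) + (\<Sum>j\<in>UNIV. Gspray L w j * glow L w k j)
      = (1/2) * (\<Sum>m\<in>UNIV. py k (px m L) w * snd w $ m + px m L w * (if m = k then 1 else 0))"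
    using e by (simp only: sum.distrib)
  have e3: "(\<Sum>m\<in>UNIV. py k (px m L) w * snd w $ m + px m L w * (if m = k then 1 else 0))
     = (\<Sum>m\<in>UNIV. px m (py k L) w * snd w $ m) + px k L w"
    by (simp add: sum.distrib c)
  have "(\<Sum>j\<in>UNIV. Nconn L w j k * py j L w) + (1/2) * ((\<Sum>m\<in>UNIV. px m (py k L) w * snd w $ m) - px k L w)
     = (1/2) * ((\<Sum>m\<in>UNIV. px m (py k L) w * snd w $ m) + px k L w)"
    using e1 unfolding e3 gk .
  then show ?thesis by (simp add: field_simps)
qed

lemma Dv: assumes w: "w \<in> E"
  shows "py i (px k L) w = (\<Sum>j\<in>UNIV. Berwald L w j k i * py j L w) + (\<Sum>j\<in>UNIV. Nconn L w j k * glow L w i j)"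
proof -
  have "py i (\<lambda>w. \<Sum>j\<in>UNIV. Nconn L w j k * py j L w) w = py i (px k L) w"
    by (rule py_cong[OF w DL])
  then show ?thesis using w by (simp add: pdrules smS py_N py_py_L sum.distrib)
qed

definition "Tl w k i l = (\<Sum>j\<in>UNIV. py j L w * py l (\<lambda>w. Berwald L w j k i) w)"
definition "Bl w a b c = (\<Sum>j\<in>UNIV. glow L w a j * Berwald L w j b c)"

lemma Dvi: assumes w: "w \<in> E"
  shows "py l (py i (px k L)) w = Tl w k i l + (\<Sum>j\<in>UNIV. Berwald L w j k i * glow L w l j)
     + (\<Sum>j\<in>UNIV. Berwald L w j k l * glow L w i j) + (\<Sum>j\<in>UNIV. Nconn L w j k * py l (\<lambda>w. glow L w i j) w)"
proof -
  have "py l (py i (px k L)) w = py l (\<lambda>w. (\<Sum>j\<in>UNIV. Berwald L w j k i * py j L w) + (\<Sum>j\<in>UNIV. Nconn L w j k * glow L w i j)) w"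
    by (rule py_cong[OF w Dv])
  then show ?thesis using w by (simp add: pdrules smS py_N py_py_L sum.distrib Tl_def mult_ac)
qed

lemma cx: assumes w: "w \<in> E" shows "px k (\<lambda>w. glow L w i l) w = py l (py i (px k L)) w"
proof -
  have "px k (\<lambda>w. glow L w i l) w = px k (py i (py l L)) w" by (simp add: glow_eq)
  also have "\<dots> = py i (px k (py l L)) w" by (rule comm_xy[OF sm_py[OF sm_L] w])
  also have "\<dots> = py i (py l (px k L)) w" by (rule py_cong[OF w comm_xy[OF sm_L]])
  also have "\<dots> = py l (py i (px k L)) w" by (rule comm_yy[OF sm_px[OF sm_L] w])
  finally show ?thesis .
qed

lemma cy: assumes w: "w \<in> E" shows "py j (\<lambda>w. glow L w i l) w = py l (\<lambda>w. glow L w i j) w"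
proof -
  have "py j (\<lambda>w. glow L w i l) w = py j (py i (py l L)) w" by (simp add: glow_eq)
  also have "\<dots> = py i (py j (py l L)) w" by (rule comm_yy[OF sm_py[OF sm_L] w])
  also have "\<dots> = py i (py l (py j L)) w" by (rule py_cong[OF w comm_yy[OF sm_L]])
  also have "\<dots> = py l (py i (py j L)) w" by (rule comm_yy[OF sm_py[OF sm_L] w])
  also have "\<dots> = py l (\<lambda>w. glow L w i j) w" by (simp add: glow_eq)
  finally show ?thesis .
qed

lemma B_sym: assumes w: "w \<in> E" shows "Berwald L w j a b = Berwald L w j b a"
proof -
  have e: "(\<lambda>w. Nconn L w j a) = py a (\<lambda>w. Gspray L w j)" for a by (auto simp: Nconn_def)
  show ?thesis unfolding Berwald_def e by (rule comm_yy[OF sm_Gspray w])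
qed

lemma T_sym1: assumes w: "w \<in> E" shows "py l (\<lambda>w. Berwald L w j k i) w = py l (\<lambda>w. Berwald L w j i k) w"
  by (rule py_cong[OF w B_sym])
lemma T_sym2: assumes w: "w \<in> E" shows "py l (\<lambda>w. Berwald L w j k i) w = py i (\<lambda>w. Berwald L w j k l) w"
proof -
  have e: "(\<lambda>w. Berwald L w j k i) = py i (\<lambda>w. Nconn L w j k)" for i by (auto simp: Berwald_def)
  show ?thesis unfolding e by (rule comm_yy[OF sm_N w])
qed
lemma Tl_sym1: "w \<in> E \<Longrightarrow> Tl w k i l = Tl w i k l"
  unfolding Tl_def using T_sym1 by simp
lemma Tl_sym2: "w \<in> E \<Longrightarrow> Tl w k i l = Tl w k l i"
  unfolding Tl_def using T_sym2 by simp
lemma Bl_sym: "w \<in> E \<Longrightarrow> Bl w a b c = Bl w a c b"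
  unfolding Bl_def using B_sym by simp

lemma dlg: assumes w: "w \<in> E"
  shows "dlt L k (\<lambda>w. glow L w i l) w = Tl w k i l + Bl w l k i + Bl w i k l"
proof -
  have "dlt L k (\<lambda>w. glow L w i l) w = py l (py i (px k L)) w - (\<Sum>j\<in>UNIV. Nconn L w j k * py l (\<lambda>w. glow L w i j) w)"
    unfolding dlt_def cx[OF w] cy[OF w] ..
  also have "\<dots> = Tl w k i l + Bl w l k i + Bl w i k l"
    unfolding Dvi[OF w] Bl_def by (simp add: mult_ac)
  finally show ?thesis .
qed

end



context fins begin

lemma dlt_mult: "sm F \<Longrightarrow> sm G \<Longrightarrow> w \<in> E \<Longrightarrow> dlt L m (\<lambda>w. F w * G w) w = dlt L m F w * G w + F w * dlt L m G w"
  by (simp add: dlt_fd sm_mult[OF E_open] D_mult)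
lemma dlt_sum: "(\<And>i. sm (F i)) \<Longrightarrow> w \<in> E \<Longrightarrow> dlt L m (\<lambda>w. \<Sum>i\<in>(UNIV::'n set). F i w) w = (\<Sum>i\<in>UNIV. dlt L m (F i) w)"
  by (simp add: dlt_fd smsum D_sum)
lemma dlt_gup: "w \<in> E \<Longrightarrow> dlt L m (\<lambda>w. gup L w a e) w =
     - (\<Sum>b\<in>UNIV. \<Sum>c\<in>UNIV. gup L w a b * dlt L m (\<lambda>w. glow L w b c) w * gup L w c e)"
  by (simp add: dlt_fd sm_gup sm_glow D_gup)
lemma py_gup: "w \<in> E \<Longrightarrow> py m (\<lambda>w. gup L w a e) w =
     - (\<Sum>b\<in>UNIV. \<Sum>c\<in>UNIV. gup L w a b * py m (\<lambda>w. glow L w b c) w * gup L w c e)"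
  unfolding py_def by (rule D_gup)

lemma dlt_gsym: "w \<in> E \<Longrightarrow> dlt L m (\<lambda>w. glow L w a b) w = dlt L m (\<lambda>w. glow L w b a) w"
  by (rule dlt_cong) (auto intro: g_sym)

lemma Gam_sym: assumes w: "w \<in> E" shows "Gam L w a b c = Gam L w a c b"
  unfolding Gam_def using dlt_gsym[OF w] by (simp add: algebra_simps)

lemma lowerGam: assumes w: "w \<in> E" shows "(\<Sum>r\<in>UNIV. glow L w s r * Gam L w r b c) =
   (1/2) * (dlt L b (\<lambda>w. glow L w s c) w + dlt L c (\<lambda>w. glow L w s b) w - dlt L s (\<lambda>w. glow L w b c) w)"
proof -
  define X where "X = (\<lambda>s. dlt L b (\<lambda>w. glow L w s c) w + dlt L c (\<lambda>w. glow L w s b) w - dlt L s (\<lambda>w. glow L w b c) w)"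
  have "(\<Sum>r\<in>UNIV. glow L w s r * Gam L w r b c) = (1/2) * (\<Sum>r\<in>UNIV. glow L w s r * (\<Sum>q\<in>UNIV. gup L w r q * X q))"
    unfolding Gam_def X_def by (simp add: sum_distrib_left mult_ac)
  also have "\<dots> = (1/2) * X s" using gh_contract[OF w] by simp
  finally show ?thesis unfolding X_def .
qed

lemma metric: assumes w: "w \<in> E" shows "dlt L a (\<lambda>w. glow L w b c) w =
   (\<Sum>r\<in>UNIV. glow L w b r * Gam L w r a c) + (\<Sum>r\<in>UNIV. glow L w c r * Gam L w r a b)"
  unfolding lowerGam[OF w] using dlt_gsym[OF w] by (simp add: algebra_simps)

lemma DH: assumes w: "w \<in> E" shows "dlt L a (\<lambda>w. gup L w a e) w =
   - (\<Sum>c\<in>UNIV. Gam L w a a c * gup L w c e) - (\<Sum>b\<in>UNIV. gup L w a b * Gam L w e a b)"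
proof -
  let ?h = "gup L w" and ?g = "glow L w" and ?G = "Gam L w"
  have "dlt L a (\<lambda>w. gup L w a e) w = - (\<Sum>b\<in>UNIV. \<Sum>c\<in>UNIV. ?h a b * ((\<Sum>r\<in>UNIV. ?g b r * ?G r a c) + (\<Sum>r\<in>UNIV. ?g c r * ?G r a b)) * ?h c e)"
    by (simp add: dlt_gup[OF w] metric[OF w])
  also have "\<dots> = - (\<Sum>b\<in>UNIV. \<Sum>c\<in>UNIV. ?h a b * (\<Sum>r\<in>UNIV. ?g b r * ?G r a c) * ?h c e)
                  - (\<Sum>b\<in>UNIV. \<Sum>c\<in>UNIV. ?h a b * (\<Sum>r\<in>UNIV. ?g c r * ?G r a b) * ?h c e)"
    by (simp add: algebra_simps sum.distrib)
  also have "(\<Sum>b\<in>UNIV. \<Sum>c\<in>UNIV. ?h a b * (\<Sum>r\<in>UNIV. ?g b r * ?G r a c) * ?h c e) = (\<Sum>c\<in>UNIV. ?G a a c * ?h c e)"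
  proof -
    have "(\<Sum>b\<in>UNIV. \<Sum>c\<in>UNIV. ?h a b * (\<Sum>r\<in>UNIV. ?g b r * ?G r a c) * ?h c e) = (\<Sum>c\<in>UNIV. \<Sum>b\<in>UNIV. ?h a b * (\<Sum>r\<in>UNIV. ?g b r * ?G r a c) * ?h c e)"
      by (rule sum.swap)
    also have "\<dots> = (\<Sum>c\<in>UNIV. (\<Sum>b\<in>UNIV. ?h a b * (\<Sum>r\<in>UNIV. ?g b r * ?G r a c)) * ?h c e)"
      by (simp add: sum_distrib_right)
    also have "\<dots> = (\<Sum>c\<in>UNIV. ?G a a c * ?h c e)" using hg_contract[OF w] by simp
    finally show ?thesis .
  qed
  also have "(\<Sum>b\<in>UNIV. \<Sum>c\<in>UNIV. ?h a b * (\<Sum>r\<in>UNIV. ?g c r * ?G r a b) * ?h c e) = (\<Sum>b\<in>UNIV. ?h a b * ?G e a b)"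
  proof -
    have "(\<Sum>b\<in>UNIV. \<Sum>c\<in>UNIV. ?h a b * (\<Sum>r\<in>UNIV. ?g c r * ?G r a b) * ?h c e) = (\<Sum>b\<in>UNIV. ?h a b * (\<Sum>c\<in>UNIV. ?h e c * (\<Sum>r\<in>UNIV. ?g c r * ?G r a b)))"
      by (simp add: sum_distrib_left h_sym[OF w, of _ e] mult_ac)
    also have "\<dots> = (\<Sum>b\<in>UNIV. ?h a b * ?G e a b)" using hg_contract[OF w] by simp
    finally show ?thesis .
  qed
  finally show ?thesis .
qed

end



context fins begin

lemma Gam_form: assumes w: "w \<in> E"
  shows "Gam L w a b c = (1/2) * (\<Sum>s\<in>UNIV. gup L w a s * Tl w s b c) + Berwald L w a b c"
proof -
  have inner: "dlt L b (\<lambda>w. glow L w s c) w + dlt L c (\<lambda>w. glow L w s b) w - dlt L s (\<lambda>w. glow L w b c) w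
      = Tl w s b c + 2 * Bl w s b c" for s
  proof -
    have t1: "Tl w b s c = Tl w s b c" using Tl_sym1[OF w] by simp
    have t2: "Tl w c s b = Tl w s b c" using Tl_sym1[OF w, of c s b] Tl_sym2[OF w, of s c b] by simp
    have b1: "Bl w c b s = Bl w c s b" using Bl_sym[OF w] by simp
    have b2: "Bl w b c s = Bl w b s c" using Bl_sym[OF w] by simp
    have b3: "Bl w s c b = Bl w s b c" using Bl_sym[OF w] by simp
    show ?thesis unfolding dlg[OF w] using t1 t2 b1 b2 b3 by simp
  qed
  have "Gam L w a b c = (1/2) * (\<Sum>s\<in>UNIV. gup L w a s * (Tl w s b c + 2 * Bl w s b c))"
    unfolding Gam_def inner ..
  also have "\<dots> = (1/2) * (\<Sum>s\<in>UNIV. gup L w a s * Tl w s b c) + (\<Sum>s\<in>UNIV. gup L w a s * Bl w s b c)"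
    by (simp add: algebra_simps sum.distrib sum_distrib_left)
  also have "(\<Sum>s\<in>UNIV. gup L w a s * Bl w s b c) = Berwald L w a b c"
    unfolding Bl_def using hg_contract[OF w] by simp
  finally show ?thesis .
qed

lemma Lands_form: assumes w: "w \<in> E"
  shows "Lands L w a b c = - (1/2) * (\<Sum>s\<in>UNIV. gup L w a s * Tl w s b c)"
  unfolding Lands_def Gam_form[OF w] by simp

lemma LJ: assumes w: "w \<in> E"
  shows "(\<Sum>m\<in>UNIV. \<Sum>n\<in>UNIV. gup L w m n * Lands L w a n m) = Jup L w a"
proof -
  define \<Phi> where "\<Phi> = (\<lambda>p q r. gup L w a p * gup L w q r * Tl w p r q)"
  have J: "Jlow L w p = - (1/2) * (\<Sum>q\<in>UNIV. \<Sum>r\<in>UNIV. gup L w q r * Tl w p r q)" for p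
  proof -
    have e: "Lands L w q p q = - (1/2) * (\<Sum>r\<in>UNIV. gup L w q r * Tl w p r q)" for q
    proof -
      have "Lands L w q p q = - (1/2) * (\<Sum>r\<in>UNIV. gup L w q r * Tl w r p q)" by (rule Lands_form[OF w])
      also have "(\<Sum>r\<in>UNIV. gup L w q r * Tl w r p q) = (\<Sum>r\<in>UNIV. gup L w q r * Tl w p r q)"
        by (rule sum.cong[OF refl]) (simp only: Tl_sym1[OF w, of _ p])
      finally show ?thesis .
    qed
    have "Jlow L w p = (\<Sum>q\<in>UNIV. Lands L w q p q)" by (simp only: Jlow_def)
    also have "\<dots> = (\<Sum>q\<in>UNIV. - (1/2) * (\<Sum>r\<in>UNIV. gup L w q r * Tl w p r q))" by (simp only: e)
    also have "\<dots> = - (1/2) * (\<Sum>q\<in>UNIV. \<Sum>r\<in>UNIV. gup L w q r * Tl w p r q)"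
      by (rule sum_distrib_left[symmetric])
    finally show ?thesis .
  qed
  have A: "Jup L w a = - (1/2) * (\<Sum>p\<in>UNIV. \<Sum>q\<in>UNIV. \<Sum>r\<in>UNIV. \<Phi> p q r)"
    unfolding Jup_def J \<Phi>_def by (simp add: sum_distrib_left mult_ac)
  have B: "(\<Sum>m\<in>UNIV. \<Sum>n\<in>UNIV. gup L w m n * Lands L w a n m) = - (1/2) * (\<Sum>q\<in>UNIV. \<Sum>r\<in>UNIV. \<Sum>p\<in>UNIV. \<Phi> p q r)"
    unfolding Lands_form[OF w] \<Phi>_def by (simp add: sum_distrib_left mult_ac)
  show ?thesis unfolding A B by (subst sum3_rot) (rule refl)
qed

end



context fins begin

lemma first_id: assumes z: "z \<in> E" and f: "sm f"
  shows "divHC L (\<lambda>w \<mu>. \<Sum>\<nu>\<in>UNIV. gup L w \<mu> \<nu> * py \<nu> f w) z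
       = (\<Sum>\<mu>\<in>UNIV. \<Sum>\<nu>\<in>UNIV. gup L z \<mu> \<nu> *
            (dlt L \<mu> (py \<nu> f) z - (\<Sum>\<alpha>\<in>UNIV. Gam L z \<alpha> \<nu> \<mu> * py \<alpha> f z)))"
proof -
  let ?h = "gup L z" and ?G = "Gam L z" and ?fv = "\<lambda>\<nu>. py \<nu> f z" and ?dl = "\<lambda>\<alpha> \<nu>. dlt L \<alpha> (py \<nu> f) z"
  have Dz: "dlt L a (\<lambda>w. \<Sum>\<nu>\<in>UNIV. gup L w a \<nu> * py \<nu> f w) z =
     (\<Sum>\<nu>\<in>UNIV. (- (\<Sum>c\<in>UNIV. ?G a a c * ?h c \<nu>) - (\<Sum>b\<in>UNIV. ?h a b * ?G \<nu> a b)) * ?fv \<nu> + ?h a \<nu> * ?dl a \<nu>)" for a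
    using z f by (simp add: dlt_sum dlt_mult smS DH)
  define P1 where "P1 = (\<Sum>a\<in>UNIV. \<Sum>\<nu>\<in>UNIV. ?h a \<nu> * ?dl a \<nu>)"
  define P2 where "P2 = (\<Sum>a\<in>UNIV. \<Sum>\<nu>\<in>UNIV. (\<Sum>c\<in>UNIV. ?G a a c * ?h c \<nu>) * ?fv \<nu>)"
  define P3 where "P3 = (\<Sum>a\<in>UNIV. \<Sum>\<nu>\<in>UNIV. (\<Sum>b\<in>UNIV. ?h a b * ?G \<nu> a b) * ?fv \<nu>)"
  define P4 where "P4 = (\<Sum>a\<in>UNIV. \<Sum>\<mu>\<in>UNIV. ?G a \<mu> a * (\<Sum>\<nu>\<in>UNIV. ?h \<mu> \<nu> * ?fv \<nu>))"
  define Q where "Q = (\<Sum>\<mu>\<in>UNIV. \<Sum>\<nu>\<in>UNIV. ?h \<mu> \<nu> * (\<Sum>\<alpha>\<in>UNIV. ?G \<alpha> \<nu> \<mu> * ?fv \<alpha>))"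
  have lhs: "divHC L (\<lambda>w \<mu>. \<Sum>\<nu>\<in>UNIV. gup L w \<mu> \<nu> * py \<nu> f w) z = P1 - P2 - P3 + P4"
    unfolding divHC_def Dz P1_def P2_def P3_def P4_def
    by (simp add: sum.distrib sum_subtractf algebra_simps)
  have rhs: "(\<Sum>\<mu>\<in>UNIV. \<Sum>\<nu>\<in>UNIV. ?h \<mu> \<nu> * (?dl \<mu> \<nu> - (\<Sum>\<alpha>\<in>UNIV. ?G \<alpha> \<nu> \<mu> * ?fv \<alpha>))) = P1 - Q"
    unfolding P1_def Q_def by (simp add: sum.distrib sum_subtractf algebra_simps)
  have P24: "P2 = P4"
  proof -
    have "P2 = (\<Sum>a\<in>UNIV. \<Sum>\<nu>\<in>UNIV. \<Sum>c\<in>UNIV. ?G a a c * (?h c \<nu> * ?fv \<nu>))"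
      unfolding P2_def by (simp add: sum_distrib_right mult.assoc)
    also have "\<dots> = (\<Sum>a\<in>UNIV. \<Sum>c\<in>UNIV. \<Sum>\<nu>\<in>UNIV. ?G a a c * (?h c \<nu> * ?fv \<nu>))"
      by (rule sum.cong[OF refl], rule sum.swap)
    also have "\<dots> = P4" unfolding P4_def using Gam_sym[OF z]
      by (simp add: sum_distrib_left)
    finally show ?thesis .
  qed
  have P3Q: "P3 = Q"
  proof -
    have "P3 = (\<Sum>a\<in>UNIV. \<Sum>\<nu>\<in>UNIV. \<Sum>b\<in>UNIV. ?h a b * ?G \<nu> a b * ?fv \<nu>)"
      unfolding P3_def by (simp add: sum_distrib_right)
    also have "\<dots> = (\<Sum>a\<in>UNIV. \<Sum>b\<in>UNIV. \<Sum>\<nu>\<in>UNIV. ?h a b * ?G \<nu> a b * ?fv \<nu>)"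
      by (rule sum.cong[OF refl], rule sum.swap)
    also have "\<dots> = Q" unfolding Q_def using Gam_sym[OF z]
      by (simp add: sum_distrib_left mult.assoc)
    finally show ?thesis .
  qed
  show ?thesis unfolding lhs rhs P24 P3Q by simp
qed

end



context fins begin

lemma py_dlt: assumes z: "z \<in> E" and f: "sm f"
  shows "py n (dlt L m f) z = py n (px m f) z - (\<Sum>s\<in>UNIV. Berwald L z s m n * py s f z + Nconn L z s m * py n (py s f) z)"
  unfolding dlt_eq using z f by (simp add: pdrules smS py_N)

lemma sumI: assumes z: "z \<in> E"
  shows "(\<Sum>n\<in>UNIV. \<Sum>b\<in>UNIV. \<Sum>c\<in>UNIV. gup L z n b * py n (\<lambda>w. glow L w b c) z * gup L z c m) = 2 * Iup L z m"
proof -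
  have "(\<Sum>n\<in>UNIV. \<Sum>b\<in>UNIV. \<Sum>c\<in>UNIV. gup L z n b * py n (\<lambda>w. glow L w b c) z * gup L z c m)
      = (\<Sum>c\<in>UNIV. \<Sum>n\<in>UNIV. \<Sum>b\<in>UNIV. gup L z n b * py n (\<lambda>w. glow L w b c) z * gup L z c m)"
    by (rule sum3_rot)
  also have "\<dots> = (\<Sum>c\<in>UNIV. gup L z m c * (2 * Ilow L z c))"
    unfolding Ilow_def Cartan_def using h_sym[OF z]
    by (simp add: sum_distrib_left sum_distrib_right mult_ac)
  also have "\<dots> = 2 * Iup L z m" unfolding Iup_def by (simp add: sum_distrib_left mult_ac)
  finally show ?thesis .
qed

lemma second_id: assumes z: "z \<in> E" and f: "sm f"
  shows "(\<Sum>\<mu>\<in>UNIV. \<Sum>\<nu>\<in>UNIV. gup L z \<mu> \<nu> *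
                (dlt L \<mu> (py \<nu> f) z - (\<Sum>\<alpha>\<in>UNIV. Gam L z \<alpha> \<nu> \<mu> * py \<alpha> f z)))
           = (\<Sum>\<nu>\<in>UNIV. py \<nu> (\<lambda>w. \<Sum>\<mu>\<in>UNIV. gup L w \<nu> \<mu> * dlt L \<mu> f w) z)
             + 2 * (\<Sum>\<mu>\<in>UNIV. Iup L z \<mu> * dlt L \<mu> f z)
             + (\<Sum>\<alpha>\<in>UNIV. Jup L z \<alpha> * py \<alpha> f z)"
proof -
  let ?h = "gup L z" and ?G = "Gam L z" and ?fv = "\<lambda>\<nu>. py \<nu> f z" and ?B = "Berwald L z" and ?N = "Nconn L z"
  have pyZ: "py n (\<lambda>w. \<Sum>\<mu>\<in>UNIV. gup L w n \<mu> * dlt L \<mu> f w) z =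
      (\<Sum>\<mu>\<in>UNIV. py n (\<lambda>w. gup L w n \<mu>) z * dlt L \<mu> f z + ?h n \<mu> * py n (dlt L \<mu> f) z)" for n
    using z f by (simp add: pdrules smS)
  define R1 where "R1 = (\<Sum>n\<in>UNIV. \<Sum>\<mu>\<in>UNIV. py n (\<lambda>w. gup L w n \<mu>) z * dlt L \<mu> f z)"
  define R2 where "R2 = (\<Sum>n\<in>UNIV. \<Sum>\<mu>\<in>UNIV. ?h n \<mu> * (py n (px \<mu> f) z - (\<Sum>s\<in>UNIV. ?N s \<mu> * py n (py s f) z)))"
  define R3 where "R3 = (\<Sum>n\<in>UNIV. \<Sum>\<mu>\<in>UNIV. ?h n \<mu> * (\<Sum>s\<in>UNIV. ?B s \<mu> n * ?fv s))"
  define S2 where "S2 = (\<Sum>\<mu>\<in>UNIV. \<Sum>\<nu>\<in>UNIV. ?h \<mu> \<nu> * (px \<mu> (py \<nu> f) z - (\<Sum>s\<in>UNIV. ?N s \<mu> * py s (py \<nu> f) z)))"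
  define S3 where "S3 = (\<Sum>\<mu>\<in>UNIV. \<Sum>\<nu>\<in>UNIV. ?h \<mu> \<nu> * (\<Sum>\<alpha>\<in>UNIV. ?G \<alpha> \<nu> \<mu> * ?fv \<alpha>))"
  have r: "(\<Sum>\<nu>\<in>UNIV. py \<nu> (\<lambda>w. \<Sum>\<mu>\<in>UNIV. gup L w \<nu> \<mu> * dlt L \<mu> f w) z) = R1 + R2 - R3"
    unfolding pyZ py_dlt[OF z f] R1_def R2_def R3_def
    by (simp add: sum.distrib sum_subtractf algebra_simps)
  have R1: "R1 = - 2 * (\<Sum>\<mu>\<in>UNIV. Iup L z \<mu> * dlt L \<mu> f z)"
  proof -
    have "R1 = (\<Sum>\<mu>\<in>UNIV. \<Sum>n\<in>UNIV. py n (\<lambda>w. gup L w n \<mu>) z * dlt L \<mu> f z)"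
      unfolding R1_def by (rule sum.swap)
    also have "\<dots> = (\<Sum>\<mu>\<in>UNIV. (\<Sum>n\<in>UNIV. py n (\<lambda>w. gup L w n \<mu>) z) * dlt L \<mu> f z)"
      by (simp add: sum_distrib_right)
    also have "\<dots> = (\<Sum>\<mu>\<in>UNIV. (- (2 * Iup L z \<mu>)) * dlt L \<mu> f z)"
      using sumI[OF z] by (simp add: py_gup[OF z] sum_negf)
    finally show ?thesis by (simp add: sum_distrib_left sum_negf mult.assoc)
  qed
  have lhs: "(\<Sum>\<mu>\<in>UNIV. \<Sum>\<nu>\<in>UNIV. ?h \<mu> \<nu> * (dlt L \<mu> (py \<nu> f) z - (\<Sum>\<alpha>\<in>UNIV. ?G \<alpha> \<nu> \<mu> * ?fv \<alpha>))) = S2 - S3"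
    unfolding S2_def S3_def dlt_def by (simp add: sum.distrib sum_subtractf algebra_simps)
  have RS2: "R2 = S2"
  proof -
    have "R2 = (\<Sum>\<mu>\<in>UNIV. \<Sum>n\<in>UNIV. ?h n \<mu> * (py n (px \<mu> f) z - (\<Sum>s\<in>UNIV. ?N s \<mu> * py n (py s f) z)))"
      unfolding R2_def by (rule sum.swap)
    also have "\<dots> = S2" unfolding S2_def
      using h_sym[OF z] comm_xy[OF f z] comm_yy[OF f z] by simp
    finally show ?thesis .
  qed
  have RS3: "R3 - S3 = (\<Sum>\<alpha>\<in>UNIV. Jup L z \<alpha> * py \<alpha> f z)"
  proof -
    have "R3 = (\<Sum>n\<in>UNIV. \<Sum>\<mu>\<in>UNIV. \<Sum>s\<in>UNIV. ?h n \<mu> * ?B s \<mu> n * ?fv s)"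
      unfolding R3_def by (simp add: sum_distrib_left mult.assoc)
    also have "\<dots> = (\<Sum>s\<in>UNIV. \<Sum>n\<in>UNIV. \<Sum>\<mu>\<in>UNIV. ?h n \<mu> * ?B s \<mu> n * ?fv s)"
      by (rule sum3_rot)
    also have "\<dots> = (\<Sum>s\<in>UNIV. ?fv s * (\<Sum>n\<in>UNIV. \<Sum>\<mu>\<in>UNIV. ?h n \<mu> * ?B s \<mu> n))"
      by (simp add: sum_distrib_left sum_distrib_right mult_ac)
    finally have R3': "R3 = \<dots>" .
    have "S3 = (\<Sum>\<mu>\<in>UNIV. \<Sum>\<nu>\<in>UNIV. \<Sum>s\<in>UNIV. ?h \<mu> \<nu> * ?G s \<nu> \<mu> * ?fv s)"
      unfolding S3_def by (simp add: sum_distrib_left mult.assoc)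
    also have "\<dots> = (\<Sum>s\<in>UNIV. \<Sum>\<mu>\<in>UNIV. \<Sum>\<nu>\<in>UNIV. ?h \<mu> \<nu> * ?G s \<nu> \<mu> * ?fv s)"
      by (rule sum3_rot)
    also have "\<dots> = (\<Sum>s\<in>UNIV. ?fv s * (\<Sum>\<mu>\<in>UNIV. \<Sum>\<nu>\<in>UNIV. ?h \<mu> \<nu> * ?G s \<nu> \<mu>))"
      by (simp add: sum_distrib_left sum_distrib_right mult_ac)
    finally have S3': "S3 = \<dots>" .
    have "R3 - S3 = (\<Sum>s\<in>UNIV. ?fv s * ((\<Sum>n\<in>UNIV. \<Sum>\<mu>\<in>UNIV. ?h n \<mu> * ?B s \<mu> n) - (\<Sum>\<mu>\<in>UNIV. \<Sum>\<nu>\<in>UNIV. ?h \<mu> \<nu> * ?G s \<nu> \<mu>)))"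
      unfolding R3' S3' by (simp add: sum_subtractf right_diff_distrib)
    also have "\<dots> = (\<Sum>s\<in>UNIV. ?fv s * Jup L z s)"
    proof (rule sum.cong[OF refl])
      fix s
      have "(\<Sum>n\<in>UNIV. \<Sum>\<mu>\<in>UNIV. ?h n \<mu> * ?B s \<mu> n) - (\<Sum>\<mu>\<in>UNIV. \<Sum>\<nu>\<in>UNIV. ?h \<mu> \<nu> * ?G s \<nu> \<mu>)
          = (\<Sum>m\<in>UNIV. \<Sum>n\<in>UNIV. gup L z m n * Lands L z s n m)"
        unfolding Lands_def by (simp add: sum_subtractf right_diff_distrib)
      then show "?fv s * ((\<Sum>n\<in>UNIV. \<Sum>\<mu>\<in>UNIV. ?h n \<mu> * ?B s \<mu> n) - (\<Sum>\<mu>\<in>UNIV. \<Sum>\<nu>\<in>UNIV. ?h \<mu> \<nu> * ?G s \<nu> \<mu>))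
          = ?fv s * Jup L z s" using LJ[OF z] by simp
    qed
    finally show ?thesis by (simp add: mult.commute)
  qed
  show ?thesis unfolding lhs r R1 using RS2 RS3 by simp
qed

end

theorem mainTheorem7:
  fixes U :: "(real^'n::finite) set"
    and L f :: "'n pt \<Rightarrow> real"
  defines "E \<equiv> U \<times> (UNIV - {0})"
  assumes U_open: "open U"
    and L_smooth: "smooth_on E L"
    and L_hom: "\<And>x y t. x \<in> U \<Longrightarrow> y \<noteq> 0 \<Longrightarrow> t > 0 \<Longrightarrow> L (x, t *\<^sub>R y) = t\<^sup>2 * L (x, y)"
    and L_nondeg: "\<And>z. z \<in> E \<Longrightarrow> det (gmat L z) \<noteq> 0"
    and f_smooth: "smooth_on E f"
    and z_in: "z \<in> E"
  shows "divHC L (\<lambda>w \<mu>. \<Sum>\<nu>\<in>UNIV. gup L w \<mu> \<nu> * py \<nu> f w) z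
           = (\<Sum>\<mu>\<in>UNIV. \<Sum>\<nu>\<in>UNIV. gup L z \<mu> \<nu> *
                (dlt L \<mu> (py \<nu> f) z - (\<Sum>\<alpha>\<in>UNIV. Gam L z \<alpha> \<nu> \<mu> * py \<alpha> f z)))
       \<and> (\<Sum>\<mu>\<in>UNIV. \<Sum>\<nu>\<in>UNIV. gup L z \<mu> \<nu> *
                (dlt L \<mu> (py \<nu> f) z - (\<Sum>\<alpha>\<in>UNIV. Gam L z \<alpha> \<nu> \<mu> * py \<alpha> f z)))
           = (\<Sum>\<nu>\<in>UNIV. py \<nu> (\<lambda>w. \<Sum>\<mu>\<in>UNIV. gup L w \<nu> \<mu> * dlt L \<mu> f w) z)
             + 2 * (\<Sum>\<mu>\<in>UNIV. Iup L z \<mu> * dlt L \<mu> f z)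
             + (\<Sum>\<alpha>\<in>UNIV. Jup L z \<alpha> * py \<alpha> f z)"
proof -
  have z: "z \<in> U \<times> (UNIV - {0})" using z_in unfolding E_def .
  have f: "smooth_on (U \<times> (UNIV - {0})) f" using f_smooth unfolding E_def .
  interpret fins U L
  proof unfold_locales
    show "open U" by (rule U_open)
    show "smooth_on (U \<times> (UNIV - {0})) L" using L_smooth unfolding E_def .
    show "\<And>x y t. x \<in> U \<Longrightarrow> y \<noteq> 0 \<Longrightarrow> t > 0 \<Longrightarrow> L (x, t *\<^sub>R y) = t\<^sup>2 * L (x, y)" by (rule L_hom)
    show "\<And>z. z \<in> U \<times> (UNIV - {0}) \<Longrightarrow> det (gmat L z) \<noteq> 0" using L_nondeg unfolding E_def .
  qed
  show ?thesis by (rule conjI[OF first_id[OF z f] second_id[OF z f]])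
qed

end
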